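(* Consider the data model, the two-expert separate-training pMoE and its router-training procedure described in the context. For every integer $l\ge l^*$, with high probability (probability at least $1-1/\mathrm{poly}(n)$) over the random initialization $w_s^{(0)}\sim\mathcal{N}(0,\sigma_r^2 I_{d})$, $s\in\{1,2\}$, with $\sigma_r=\Theta\big(1/(n^2\log(\mathrm{poly}(n))\sqrt d)\big)$ (and over the sampled minibatches), after running minibatch SGD on the router loss with batch size $B_r=\Omega\big(n^2/(1-\delta_d)^2\big)$ and learning rate $\eta_r=\Theta(1/n)$ for $T_r=\Omega\big(1/(1-\delta_d)\big)$ iterations, the returned gating kernels $w_1,w_2$ satisfy: for every $(x,y=+1)$ in the support of $\mathcal{D}$, the index $j$ with $x^{(j)}=o_1$ belongs to $J_1(w_1,x)$; and for every $(x,y=-1)$ in the support of $\mathcal{D}$, the index $j$ with $x^{(j)}=o_2$ belongs to $J_2(w_2,x)$.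
   Context: Data model. An input $x\in\mathbb{R}^{nd}$ consists of $n$ patches $x^{(1)},\dots,x^{(n)}\in\mathbb{R}^d$; labels are $y\in\{+1,-1\}$. There are two unit vectors $o_1,o_2\in\mathbb{R}^d$ (class-discriminative patterns) with $\delta_d:=\langle o_1,o_2\rangle\in(-1,1)$, and $p$ pairwise disjoint sets $S_1,\dots,S_p$ of unit vectors in $\mathbb{R}^d$ (class-irrelevant patterns); there is $\delta_r\in[0,1)$ with $|\langle o_i,q\rangle|\le\delta_r$ for $i=1,2$ and all $q\in\bigcup_j S_j$, and each $S_j$ lies in a ball of diameter $\Theta(\sqrt{(1-\delta_r^2)/(dp^2)})$. Under the distribution $\mathcal{D}$: the two labels each have probability $1/2$; each sample has exactly one patch equal to a class-discriminative pattern, namely $o_1$ if $y=+1$ and $o_2$ if $y=-1$; the remaining $n-1$ patches lie in $\bigcup_j S_j$, and the class-irrelevant patterns are identically distributed in both classes. Let $l^*$ be an integer such that every $x$ in the support of $\mathcal{D}$ has at most $l^*-1$ class-irrelevant patches $q$ with $|\langle o_1-o_2,q\rangle|>(1-\delta_d)/2$. Routers. For gating kernels $w_1,w_2\in\mathbb{R}^d$, let $J_s(w_s,x)\subseteq[n]$ be the index set of the $l$ largest values of $\langle w_s,x^{(j)}\rangle$ over $j\in[n]$ (patches with these indices are sent to expert $s$). Router training. Using i.i.d. samples $(x_i,y_i)$ from $\mathcal{D}$, the kernels are trained by minibatch SGD (fresh minibatch each iteration) on the linear loss $\ell_r(w_1,w_2)=-\frac{1}{B_r}\sum_{(x,y)\in\text{batch}}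 y\,\langle w_1-w_2,\sum_{j=1}^n x^{(j)}\rangle$, updating $w_s\leftarrow w_s-\eta_r\,\partial\ell_r/\partial w_s$ for $s=1,2$. Asymptotic notation may hide constants and factors logarithmic in $n$. *)

theory Defs
  imports "HOL-Probability.Probability"
begin

text \<open>A vector of R^d is represented by a function nat => real, only
  coordinates i < d matter; the data vectors (o1, o2, the class-irrelevant patterns) are
  required to vanish outside {..<d}.  An input x consists of n patches x 0, ..., x (n-1),
  i.e. x :: nat => nat => real (x j i = coordinate i of patch j).  A labelled sample is a
  pair (x, y) with y :: real in {1, -1}.  Explicit carriers (rather than type-indexed
  dimensions) are used so that the hidden asymptotic constants can be quantified
  uniformly over n and d.\<close>

type_synonym vec = "nat \<Rightarrow> real"
type_synonym inp = "nat \<Rightarrow> vec"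
type_synonym sample = "inp \<times> real"

definition vinner :: "nat \<Rightarrow> vec \<Rightarrow> vec \<Rightarrow> real" where
  "vinner d u v = (\<Sum>i<d. u i * v i)"

definition dvec :: "nat \<Rightarrow> vec \<Rightarrow> bool" where
  "dvec d v \<longleftrightarrow> (\<forall>i\<ge>d. v i = 0)"

definition unit_vec :: "nat \<Rightarrow> vec \<Rightarrow> bool" where
  "unit_vec d v \<longleftrightarrow> dvec d v \<and> vinner d v v = 1"

definition dcball :: "nat \<Rightarrow> vec \<Rightarrow> real \<Rightarrow> vec set" where
  "dcball d c r = {v. dvec d v \<and> sqrt (vinner d (\<lambda>i. v i - c i) (\<lambda>i. v i - c i)) \<le> r}"

definition inp_space :: "inp measure" where
  "inp_space = PiM UNIV (\<lambda>_::nat. PiM UNIV (\<lambda>_::nat. (borel :: real measure)))"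

definition sample_space :: "sample measure" where
  "sample_space = inp_space \<Otimes>\<^sub>M (borel :: real measure)"

definition irr_part :: "nat \<Rightarrow> vec \<Rightarrow> vec \<Rightarrow> inp \<Rightarrow> inp" where
  "irr_part n o1 o2 x = (\<lambda>j. if j < n \<and> x j \<noteq> o1 \<and> x j \<noteq> o2 then x j else (\<lambda>_. 0))"

text \<open>A set of inputs invariant under permutation of the n patch positions
  (so that events about such sets only depend on the multiset of patches).\<close>
definition perm_invariant :: "nat \<Rightarrow> inp set \<Rightarrow> bool" where
  "perm_invariant n A \<longleftrightarrow> (\<forall>\<pi> x. \<pi> permutes {..<n} \<longrightarrow> (x \<in> A \<longleftrightarrow> x \<circ> \<pi> \<in> A))"

text \<open>X is a measurable set of D-probability one on which
  all the support conditions hold (e.g. the support of D); cS is the hidden constant in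
  the diameter bound Theta(sqrt((1-delta_r^2)/(d p^2))).\<close>
definition data_model ::
  "real \<Rightarrow> nat \<Rightarrow> nat \<Rightarrow> nat \<Rightarrow> real \<Rightarrow> real \<Rightarrow> vec \<Rightarrow> vec \<Rightarrow> (nat \<Rightarrow> vec set)
    \<Rightarrow> sample measure \<Rightarrow> sample set \<Rightarrow> nat \<Rightarrow> bool" where
  "data_model cS n d p \<delta>d \<delta>r o1 o2 S D X lstar \<longleftrightarrow>
     \<comment> \<open>class-discriminative patterns\<close>
     unit_vec d o1 \<and> unit_vec d o2 \<and> \<delta>d = vinner d o1 o2 \<and> -1 < \<delta>d \<and> \<delta>d < 1 \<and>
     \<comment> \<open>class-irrelevant patterns\<close>
     (\<forall>j<p. \<forall>q\<in>S j. unit_vec d q) \<and>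
     (\<forall>j<p. \<forall>k<p. j \<noteq> k \<longrightarrow> S j \<inter> S k = {}) \<and>
     0 \<le> \<delta>r \<and> \<delta>r < 1 \<and>
     (\<forall>j<p. \<forall>q\<in>S j. \<bar>vinner d o1 q\<bar> \<le> \<delta>r \<and> \<bar>vinner d o2 q\<bar> \<le> \<delta>r) \<and>
     (\<forall>j<p. \<exists>c. S j \<subseteq> dcball d c (cS * sqrt ((1 - \<delta>r\<^sup>2) / (real d * (real p)\<^sup>2)) / 2)) \<and>
     \<comment> \<open>the distribution\<close>
     prob_space D \<and> sets D = sets sample_space \<and>
     X \<in> sets D \<and> emeasure D X = 1 \<and>
     measure D {z \<in> space D. snd z = 1} = 1/2 \<and>
     measure D {z \<in> space D. snd z = -1} = 1/2 \<and>
     (\<forall>(x, y) \<in> X.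
        (y = 1 \<or> y = -1) \<and>
        (\<exists>j<n. x j = (if y = 1 then o1 else o2) \<and>
           (\<forall>j'<n. j' \<noteq> j \<longrightarrow> (\<exists>k<p. x j' \<in> S k))) \<and>
        card {j. j < n \<and> (\<exists>k<p. x j \<in> S k) \<and>
                 \<bar>vinner d (\<lambda>i. o1 i - o2 i) (x j)\<bar> > (1 - \<delta>d) / 2} < lstar) \<and>
     \<comment> \<open>class-irrelevant patterns identically distributed in both classes\<close>
     (\<forall>A \<in> sets inp_space. perm_invariant n A \<longrightarrow>
        measure D {z \<in> space D. snd z = 1 \<and> irr_part n o1 o2 (fst z) \<in> A} =
        measure D {z \<in> space D. snd z = -1 \<and> irr_part n o1 o2 (fst z) \<in> A})"

text \<open>J_s(w,x): J is an index set of the l largest values of <w, x^(j)>, j in [n]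
  (any tie-breaking).\<close>
definition is_topl :: "nat \<Rightarrow> nat \<Rightarrow> nat \<Rightarrow> vec \<Rightarrow> inp \<Rightarrow> nat set \<Rightarrow> bool" where
  "is_topl d n l w x J \<longleftrightarrow> J \<subseteq> {..<n} \<and> card J = l \<and>
     (\<forall>j\<in>J. \<forall>j'\<in>{..<n} - J. vinner d w (x j') \<le> vinner d w (x j))"

definition router_loss :: "nat \<Rightarrow> nat \<Rightarrow> nat \<Rightarrow> (nat \<Rightarrow> sample) \<Rightarrow> nat \<Rightarrow> vec \<Rightarrow> vec \<Rightarrow> real" where
  "router_loss d n B s t w1 w2 = - (1 / real B) * (\<Sum>b<B. snd (s (t*B+b)) *
      vinner d (\<lambda>i. w1 i - w2 i) (\<lambda>i. \<Sum>j<n. fst (s (t*B+b)) j i))"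

definition grad1 :: "nat \<Rightarrow> nat \<Rightarrow> (nat \<Rightarrow> sample) \<Rightarrow> nat \<Rightarrow> vec" where
  "grad1 n B s t = (\<lambda>i. - (1 / real B) * (\<Sum>b<B. snd (s (t*B+b)) * (\<Sum>j<n. fst (s (t*B+b)) j i)))"

definition grad2 :: "nat \<Rightarrow> nat \<Rightarrow> (nat \<Rightarrow> sample) \<Rightarrow> nat \<Rightarrow> vec" where
  "grad2 n B s t = (\<lambda>i. (1 / real B) * (\<Sum>b<B. snd (s (t*B+b)) * (\<Sum>j<n. fst (s (t*B+b)) j i)))"

fun router_sgd :: "nat \<Rightarrow> nat \<Rightarrow> real \<Rightarrow> (nat \<Rightarrow> sample) \<Rightarrow> vec \<Rightarrow> vec \<Rightarrow> nat \<Rightarrow> vec \<times> vec" where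
  "router_sgd n B \<eta> s w1 w2 0 = (w1, w2)"
| "router_sgd n B \<eta> s w1 w2 (Suc t) =
     (let (u1, u2) = router_sgd n B \<eta> s w1 w2 t
      in (\<lambda>i. u1 i - \<eta> * grad1 n B s t i, \<lambda>i. u2 i - \<eta> * grad2 n B s t i))"

definition gauss_init :: "nat \<Rightarrow> real \<Rightarrow> vec measure" where
  "gauss_init d \<sigma> = PiM {..<d} (\<lambda>_. density lborel (normal_density 0 \<sigma>))"

text \<open>Joint randomness: independent initialisations w1, w2 and an i.i.d. sequence of samples
  from D (minibatch t uses samples t*B, ..., t*B+B-1).\<close>
definition train_space :: "nat \<Rightarrow> real \<Rightarrow> sample measure \<Rightarrow> ((vec \<times> vec) \<times> (nat \<Rightarrow> sample)) measure" where
  "train_space d \<sigma> D = (gauss_init d \<sigma> \<Otimes>\<^sub>M gauss_init d \<sigma>) \<Otimes>\<^sub>M PiM UNIV (\<lambda>_::nat. D)"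

end

theory Submission
  imports Defs
begin

definition nrm2 :: "nat \<Rightarrow> vec \<Rightarrow> real" where
  "nrm2 d v = vinner d v v"

lemma nrm2_nonneg: "0 \<le> nrm2 d v"
  unfolding nrm2_def vinner_def by (auto intro!: sum_nonneg)

lemma coord_sq_le: "c < d \<Longrightarrow> (v c)\<^sup>2 \<le> nrm2 d v"
  unfolding nrm2_def vinner_def
  using member_le_sum[of c "{..<d}" "\<lambda>i. v i * v i"] by (simp add: power2_eq_square)

lemma vinner_comm: "vinner d u v = vinner d v u"
  unfolding vinner_def by (simp add: mult.commute)

lemma vinner_cs: "\<bar>vinner d u v\<bar> \<le> sqrt (nrm2 d u) * sqrt (nrm2 d v)"
proof -
  have "\<bar>vinner d u v\<bar> \<le> (\<Sum>i<d. \<bar>u i\<bar> * \<bar>v i\<bar>)"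
    unfolding vinner_def by (metis (no_types, lifting) abs_mult sum.cong sum_abs)
  also have "\<dots> \<le> L2_set u {..<d} * L2_set v {..<d}"
    by (rule L2_set_mult_ineq)
  also have "\<dots> = sqrt (nrm2 d u) * sqrt (nrm2 d v)"
    unfolding L2_set_def nrm2_def vinner_def by (simp add: power2_eq_square)
  finally show ?thesis .
qed

lemma vinner_unit: "vinner d q q = 1 \<Longrightarrow> \<bar>vinner d w q\<bar> \<le> sqrt (nrm2 d w)"
  using vinner_cs[of d w q] by (simp add: nrm2_def)

lemma vinner_lin: "vinner d (\<lambda>c. f c + a * g c + b * h c) u = vinner d f u + a * vinner d g u + b * vinner d h u"
  unfolding vinner_def by (simp add: sum.distrib sum_distrib_left algebra_simps)

lemma sum_lessThan_add: "(\<Sum>i<a+(b::nat). f i) = (\<Sum>i<a. f i) + (\<Sum>i<b. f (a+i))"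
  by (induction b) (auto simp: add.assoc)

lemma sgd_closed:
  "router_sgd n B \<eta> s w1 w2 T =
     ((\<lambda>i. w1 i + \<eta> / real B * (\<Sum>k<T*B. snd (s k) * (\<Sum>j<n. fst (s k) j i))),
      (\<lambda>i. w2 i - \<eta> / real B * (\<Sum>k<T*B. snd (s k) * (\<Sum>j<n. fst (s k) j i))))"
proof (induction T)
  case 0 then show ?case by simp
next
  case (Suc T)
  define f where "f = (\<lambda>k i. snd (s k) * (\<Sum>j<n. fst (s k) j i))"
  have e: "\<And>i. (\<Sum>k<Suc T * B. f k i) = (\<Sum>k<T*B. f k i) + (\<Sum>b<B. f (T*B+b) i)"
    using sum_lessThan_add[where a="T*B" and b=B] by (simp add: add.commute)
  show ?case
    using e by (simp add: Suc grad1_def grad2_def f_def fun_eq_iff field_simps add_divide_distrib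
        del: mult_Suc)
qed

lemma vinner_half_diff: "vinner d (\<lambda>i. (o1 i - o2 i)/2) u = (vinner d o1 u - vinner d o2 u)/2"
  unfolding vinner_def by (simp add: sum_divide_distrib sum_subtractf[symmetric] algebra_simps)

lemma vinner_diff_left: "vinner d (\<lambda>i. o1 i - o2 i) u = vinner d o1 u - vinner d o2 u"
  unfolding vinner_def by (simp add: sum_subtractf[symmetric] algebra_simps)

lemma sqrt_le_of_sq: "x \<le> r\<^sup>2 \<Longrightarrow> 0 \<le> r \<Longrightarrow> sqrt x \<le> r"
  by (metis real_sqrt_le_mono real_sqrt_abs abs_of_nonneg)

lemma key_pos:
  fixes w0 S o1 o2 q :: vec and \<eta> T B \<delta>d :: real
  assumes u1: "vinner d o1 o1 = 1" and u2: "vinner d o2 o2 = 1" and uq: "vinner d q q = 1"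
    and dd: "\<delta>d = vinner d o1 o2" "\<delta>d < 1"
    and good: "\<bar>vinner d (\<lambda>i. o1 i - o2 i) q\<bar> \<le> (1-\<delta>d)/2"
    and pos: "\<eta> > 0" "T > 0" "B > 0"
    and w0: "nrm2 d w0 \<le> (\<eta>*T*(1-\<delta>d)/32)\<^sup>2"
    and S: "nrm2 d S \<le> (T*B*(1-\<delta>d)/16)\<^sup>2"
  shows "vinner d (\<lambda>i. w0 i + (\<eta>/B) * S i + (\<eta>*T) * ((o1 i - o2 i)/2)) q
           < vinner d (\<lambda>i. w0 i + (\<eta>/B) * S i + (\<eta>*T) * ((o1 i - o2 i)/2)) o1"
    and "vinner d (\<lambda>i. w0 i + (-(\<eta>/B)) * S i + (-(\<eta>*T)) * ((o1 i - o2 i)/2)) q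
           < vinner d (\<lambda>i. w0 i + (-(\<eta>/B)) * S i + (-(\<eta>*T)) * ((o1 i - o2 i)/2)) o2"
proof -
  define e where "e = 1 - \<delta>d"
  have e0: "e > 0" using dd by (simp add: e_def)
  have sw: "sqrt (nrm2 d w0) \<le> \<eta>*T*e/32"
    using sqrt_le_of_sq[OF w0] pos e0 by (simp add: e_def)
  have sS: "sqrt (nrm2 d S) \<le> T*B*e/16"
    using sqrt_le_of_sq[OF S] pos e0 by (simp add: e_def)
  have a1: "\<bar>vinner d w0 o1\<bar> \<le> \<eta>*T*e/32" using vinner_unit[OF u1, of w0] sw by linarith
  have a2: "\<bar>vinner d w0 o2\<bar> \<le> \<eta>*T*e/32" using vinner_unit[OF u2, of w0] sw by linarith
  have aq: "\<bar>vinner d w0 q\<bar> \<le> \<eta>*T*e/32" using vinner_unit[OF uq, of w0] sw by linarith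
  have sc: "\<bar>(\<eta>/B) * vinner d S u\<bar> \<le> \<eta>*T*e/16" if "vinner d u u = 1" for u
  proof -
    have "\<bar>vinner d S u\<bar> \<le> T*B*e/16" using vinner_unit[OF that, of S] sS by linarith
    hence "(\<eta>/B) * \<bar>vinner d S u\<bar> \<le> (\<eta>/B) * (T*B*e/16)"
      using pos by (intro mult_left_mono) auto
    also have "\<dots> = \<eta>*T*e/16" using pos by (simp add: field_simps)
    finally show ?thesis using pos by (simp add: abs_mult)
  qed
  have b1: "\<bar>(\<eta>/B) * vinner d S o1\<bar> \<le> \<eta>*T*e/16" by (rule sc[OF u1])
  have b2: "\<bar>(\<eta>/B) * vinner d S o2\<bar> \<le> \<eta>*T*e/16" by (rule sc[OF u2])
  have bq: "\<bar>(\<eta>/B) * vinner d S q\<bar> \<le> \<eta>*T*e/16" by (rule sc[OF uq])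
  have m1: "vinner d (\<lambda>i. (o1 i - o2 i)/2) o1 = e/2"
    using vinner_half_diff[of d o1 o2 o1] u1 dd vinner_comm[of d o2 o1] by (simp add: e_def)
  have m2: "vinner d (\<lambda>i. (o1 i - o2 i)/2) o2 = - e/2"
    using vinner_half_diff[of d o1 o2 o2] u2 dd by (simp add: e_def)
  have mq: "vinner d (\<lambda>i. (o1 i - o2 i)/2) q = vinner d (\<lambda>i. o1 i - o2 i) q / 2"
    using vinner_half_diff[of d o1 o2 q] vinner_diff_left[of d o1 o2 q] by simp
  have g: "\<bar>vinner d (\<lambda>i. (o1 i - o2 i)/2) q\<bar> \<le> e/4" using good mq by (simp add: e_def)
  have t0: "\<eta>*T*e > 0" using pos e0 by simp
  have ge: "(\<eta>*T) * (e/2) - (\<eta>*T) * vinner d (\<lambda>i. (o1 i - o2 i)/2) q \<ge> (\<eta>*T)*(e/4)"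
  proof -
    have "(\<eta>*T) * vinner d (\<lambda>i. (o1 i - o2 i)/2) q \<le> (\<eta>*T) * (e/4)"
      using g pos by (intro mult_left_mono) auto
    thus ?thesis by (simp add: algebra_simps)
  qed
  have ge2: "(\<eta>*T) * (e/2) + (\<eta>*T) * vinner d (\<lambda>i. (o1 i - o2 i)/2) q \<ge> (\<eta>*T)*(e/4)"
  proof -
    have "-(\<eta>*T) * vinner d (\<lambda>i. (o1 i - o2 i)/2) q = (\<eta>*T) * (- vinner d (\<lambda>i. (o1 i - o2 i)/2) q)" by simp
    also have "\<dots> \<le> (\<eta>*T) * (e/4)"
      using g pos by (intro mult_left_mono) auto
    finally have "-(\<eta>*T) * vinner d (\<lambda>i. (o1 i - o2 i)/2) q \<le> (\<eta>*T) * (e/4)" .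
    thus ?thesis by (simp add: algebra_simps)
  qed
  show "vinner d (\<lambda>i. w0 i + (\<eta>/B) * S i + (\<eta>*T) * ((o1 i - o2 i)/2)) q
           < vinner d (\<lambda>i. w0 i + (\<eta>/B) * S i + (\<eta>*T) * ((o1 i - o2 i)/2)) o1"
    unfolding vinner_lin using a1[unfolded abs_le_iff] aq[unfolded abs_le_iff] b1[unfolded abs_le_iff]
      bq[unfolded abs_le_iff] ge t0 m1 by (simp only:) linarith
  show "vinner d (\<lambda>i. w0 i + (-(\<eta>/B)) * S i + (-(\<eta>*T)) * ((o1 i - o2 i)/2)) q
           < vinner d (\<lambda>i. w0 i + (-(\<eta>/B)) * S i + (-(\<eta>*T)) * ((o1 i - o2 i)/2)) o2"
    unfolding vinner_lin using a2[unfolded abs_le_iff] aq[unfolded abs_le_iff] b2[unfolded abs_le_iff]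
      bq[unfolded abs_le_iff] ge2 t0 m2 by (simp only: mult_minus_left minus_divide_left mult_minus_right minus_minus) linarith
qed


lemma topl_mem:
  assumes "is_topl d n l w x J" "j < n" "finite Bad" "card Bad < l"
    "\<And>j'. j' < n \<Longrightarrow> j' \<noteq> j \<Longrightarrow> vinner d w (x j) \<le> vinner d w (x j') \<Longrightarrow> j' \<in> Bad"
  shows "j \<in> J"
proof (rule ccontr)
  assume nj: "j \<notin> J"
  have JB: "J \<subseteq> Bad"
  proof
    fix j' assume j': "j' \<in> J"
    have "j' < n" using assms(1) j' unfolding is_topl_def by auto
    moreover have "j' \<noteq> j" using nj j' by auto
    moreover have "vinner d w (x j) \<le> vinner d w (x j')"
      using assms(1,2) j' nj unfolding is_topl_def by auto
    ultimately show "j' \<in> Bad" using assms(5) by auto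
  qed
  have "card J \<le> card Bad" using card_mono[OF assms(3) JB] .
  thus False using assms(1,4) unfolding is_topl_def by auto
qed

lemma nrm2_add: "nrm2 d (\<lambda>c. s c + z c) = nrm2 d s + 2 * vinner d s z + nrm2 d z"
  unfolding nrm2_def vinner_def by (simp add: sum.distrib sum_distrib_left algebra_simps)


lemma conc_step:
  fixes D :: "'a measure" and Z :: "'a \<Rightarrow> nat \<Rightarrow> real"
  assumes D: "prob_space D" and meas[measurable]: "\<And>c. (\<lambda>z. Z z c) \<in> borel_measurable D"
    and bnd: "AE z in D. nrm2 d (Z z) \<le> M2"
    and mean: "\<And>c. c < d \<Longrightarrow> prob_space.expectation D (\<lambda>z. Z z c) = 0"
    and \<alpha>: "\<alpha> > 0"
  shows "(\<integral>\<^sup>+z. ennreal (exp (\<alpha> * nrm2 d (\<lambda>c. s c + Z z c))) \<partial>D)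
           \<le> ennreal (exp (\<alpha>*M2 + \<alpha>*(1+2*\<alpha>*M2) * nrm2 d s))"
proof -
  interpret prob_space D by (rule D)
  define f where "f z = vinner d s (Z z)" for z
  define R where "R = sqrt (nrm2 d s) * sqrt M2"
  have fm[measurable]: "f \<in> borel_measurable D" unfolding f_def vinner_def by measurable
  have intZ: "integrable D (\<lambda>z. Z z c)" if "c < d" for c
  proof (rule integrable_const_bound[where B="sqrt M2"])
    show "AE z in D. norm (Z z c) \<le> sqrt M2"
      using bnd
    proof eventually_elim
      case (elim z)
      have "(Z z c)\<^sup>2 \<le> M2" using coord_sq_le[OF that, of "Z z"] elim by linarith
      thus ?case by (simp add: real_le_rsqrt)
    qed
  qed simp
  have Ef0: "expectation (\<lambda>z. \<Sum>i<d. s i * Z z i) = (\<Sum>i<d. expectation (\<lambda>z. s i * Z z i))"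
    using Bochner_Integration.integral_sum[where I="{..<d}" and M=D and f="\<lambda>i z. s i * Z z i"] intZ by auto
  have Ef: "expectation f = 0"
    unfolding f_def vinner_def Ef0 using mean by simp
  have AEf: "AE z in D. f z \<in> {-R..R}"
    using bnd
  proof eventually_elim
    case (elim z)
    have "\<bar>f z\<bar> \<le> sqrt (nrm2 d s) * sqrt (nrm2 d (Z z))" unfolding f_def by (rule vinner_cs)
    also have "\<dots> \<le> R" unfolding R_def using elim
      by (intro mult_left_mono) (auto intro: real_sqrt_le_mono simp: nrm2_nonneg)
    finally show ?case by auto
  qed
  interpret ib: interval_bounded_random_variable D f "-R" R
    by unfold_locales (use AEf in auto)
  have H: "(\<integral>\<^sup>+z. ennreal (exp ((2*\<alpha>) * f z)) \<partial>D) \<le> ennreal (exp ((2*\<alpha>)\<^sup>2 * (R - - R)\<^sup>2 / 8))"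
    by (rule ib.Hoeffdings_lemma_nn_integral_0) (use \<alpha> Ef in auto)
  have M2nn: "M2 \<ge> 0"
  proof -
    have "AE z in D. 0 \<le> M2" using bnd by eventually_elim (meson nrm2_nonneg order.trans)
    thus ?thesis by simp
  qed
  have R2: "(2*\<alpha>)\<^sup>2 * (R - - R)\<^sup>2 / 8 = 2*\<alpha>*\<alpha>*M2 * nrm2 d s"
    unfolding R_def using M2nn nrm2_nonneg[of d s]
    by (simp add: power2_eq_square algebra_simps real_sqrt_mult[symmetric])
  have "(\<integral>\<^sup>+z. ennreal (exp (\<alpha> * nrm2 d (\<lambda>c. s c + Z z c))) \<partial>D)
      \<le> (\<integral>\<^sup>+z. ennreal (exp (\<alpha>*M2 + \<alpha> * nrm2 d s)) * ennreal (exp ((2*\<alpha>) * f z)) \<partial>D)"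
  proof (rule nn_integral_mono_AE)
    show "AE z in D. ennreal (exp (\<alpha> * nrm2 d (\<lambda>c. s c + Z z c)))
        \<le> ennreal (exp (\<alpha>*M2 + \<alpha> * nrm2 d s)) * ennreal (exp ((2*\<alpha>) * f z))"
      using bnd
    proof eventually_elim
      case (elim z)
      have "\<alpha> * nrm2 d (\<lambda>c. s c + Z z c) \<le> \<alpha>*M2 + \<alpha> * nrm2 d s + (2*\<alpha>) * f z"
        unfolding nrm2_add f_def using elim \<alpha> by (simp add: algebra_simps mult_left_mono)
      hence "exp (\<alpha> * nrm2 d (\<lambda>c. s c + Z z c)) \<le> exp (\<alpha>*M2 + \<alpha> * nrm2 d s) * exp ((2*\<alpha>) * f z)"
        by (simp add: exp_add[symmetric])
      thus ?case by (simp add: ennreal_mult[symmetric] ennreal_leI)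
    qed
  qed
  also have "\<dots> = ennreal (exp (\<alpha>*M2 + \<alpha> * nrm2 d s)) * (\<integral>\<^sup>+z. ennreal (exp ((2*\<alpha>) * f z)) \<partial>D)"
    by (rule nn_integral_cmult) measurable
  also have "\<dots> \<le> ennreal (exp (\<alpha>*M2 + \<alpha> * nrm2 d s)) * ennreal (exp (2*\<alpha>*\<alpha>*M2 * nrm2 d s))"
    using H[unfolded R2] by (intro mult_left_mono) auto
  also have "\<dots> = ennreal (exp (\<alpha>*M2 + \<alpha>*(1+2*\<alpha>*M2) * nrm2 d s))"
    by (simp add: ennreal_mult[symmetric] exp_add[symmetric] algebra_simps)
  finally show ?thesis .
qed


lemma conc_prod:
  fixes D :: "'a measure" and Z :: "'a \<Rightarrow> nat \<Rightarrow> real"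
  assumes D: "prob_space D" and meas[measurable]: "\<And>c. (\<lambda>z. Z z c) \<in> borel_measurable D"
    and bnd: "AE z in D. nrm2 d (Z z) \<le> M2"
    and mean: "\<And>c. c < d \<Longrightarrow> prob_space.expectation D (\<lambda>z. Z z c) = 0"
  shows "\<alpha> > 0 \<Longrightarrow> 4 * real K * \<alpha> * M2 \<le> 1 \<Longrightarrow>
    (\<integral>\<^sup>+x. ennreal (exp (\<alpha> * nrm2 d (\<lambda>c. \<Sum>i<K. Z (x i) c))) \<partial>PiM {..<K} (\<lambda>_. D))
      \<le> ennreal (exp (2 * real K * \<alpha> * M2))"
proof (induction K arbitrary: \<alpha>)
  case 0
  interpret P: prob_space "PiM ({}::nat set) (\<lambda>_. D)"
    by (rule prob_space_PiM) (use D in auto)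
  show ?case by (simp add: nrm2_def vinner_def P.emeasure_space_1)
next
  case (Suc K)
  interpret D: prob_space D by (rule D)
  interpret PS: product_sigma_finite "\<lambda>_::nat. D"
    by unfold_locales
  have M2nn: "M2 \<ge> 0"
  proof -
    have "AE z in D. 0 \<le> M2" using bnd by eventually_elim (meson nrm2_nonneg order.trans)
    thus ?thesis by simp
  qed
  define \<alpha>' where "\<alpha>' = \<alpha>*(1+2*\<alpha>*M2)"
  have a'pos: "\<alpha>' > 0" unfolding \<alpha>'_def using Suc.prems M2nn by (simp add: add_pos_nonneg)
  have aM: "\<alpha> * M2 \<le> 1 / (4 * (real K + 1))"
    using Suc.prems by (simp add: field_simps)
  have a'cond: "4 * real K * \<alpha>' * M2 \<le> 1"
  proof -
    have am0: "\<alpha> * M2 \<ge> 0" using Suc.prems M2nn by simp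
    have "4 * real K * \<alpha>' * M2 = 4 * real K * (\<alpha> * M2) * (1 + 2 * (\<alpha> * M2))"
      unfolding \<alpha>'_def by (simp add: algebra_simps)
    also have "\<dots> \<le> 4 * real K * (1 / (4 * (real K + 1))) * (1 + 2 * (1 / (4 * (real K + 1))))"
      using aM am0 by (intro mult_mono mult_left_mono add_left_mono) auto
    also have "\<dots> \<le> 1"
    proof -
      have p: "(0::real) < 16 + (real K * 32 + real K * (real K * 16))" by (simp add: add_pos_nonneg)
      have "(real K * 24 + real K * (real K * 16)) \<le> (16 + (real K * 32 + real K * (real K * 16)))" by simp
      thus ?thesis using p by (simp add: field_simps)
    qed
    finally show ?thesis .
  qed
  have IH: "(\<integral>\<^sup>+x. ennreal (exp (\<alpha>' * nrm2 d (\<lambda>c. \<Sum>i<K. Z (x i) c))) \<partial>PiM {..<K} (\<lambda>_. D))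
      \<le> ennreal (exp (2 * real K * \<alpha>' * M2))"
    by (rule Suc.IH[OF a'pos a'cond])
  have ins: "{..<Suc K} = insert K {..<K}" by auto
  have "(\<integral>\<^sup>+x. ennreal (exp (\<alpha> * nrm2 d (\<lambda>c. \<Sum>i<Suc K. Z (x i) c))) \<partial>PiM {..<Suc K} (\<lambda>_. D))
     = (\<integral>\<^sup>+x. (\<integral>\<^sup>+y. ennreal (exp (\<alpha> * nrm2 d (\<lambda>c. \<Sum>i<Suc K. Z ((x(K := y)) i) c))) \<partial>D) \<partial>PiM {..<K} (\<lambda>_. D))"
    unfolding ins
    by (rule PS.product_nn_integral_insert) (auto simp: nrm2_def vinner_def)
  also have "\<dots> \<le> (\<integral>\<^sup>+x. ennreal (exp (\<alpha>*M2)) * ennreal (exp (\<alpha>' * nrm2 d (\<lambda>c. \<Sum>i<K. Z (x i) c))) \<partial>PiM {..<K} (\<lambda>_. D))"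
  proof (rule nn_integral_mono)
    fix x
    have e: "(\<lambda>c. \<Sum>i<Suc K. Z ((x(K := y)) i) c) = (\<lambda>c. (\<Sum>i<K. Z (x i) c) + Z y c)" for y
      by (auto simp: fun_eq_iff intro!: sum.cong)
    show "(\<integral>\<^sup>+y. ennreal (exp (\<alpha> * nrm2 d (\<lambda>c. \<Sum>i<Suc K. Z ((x(K := y)) i) c))) \<partial>D)
        \<le> ennreal (exp (\<alpha>*M2)) * ennreal (exp (\<alpha>' * nrm2 d (\<lambda>c. \<Sum>i<K. Z (x i) c)))"
      unfolding e
      using conc_step[OF D meas bnd mean Suc.prems(1), of "\<lambda>c. \<Sum>i<K. Z (x i) c"]
      by (simp add: \<alpha>'_def ennreal_mult[symmetric] exp_add[symmetric])
  qed
  also have "\<dots> = ennreal (exp (\<alpha>*M2)) * (\<integral>\<^sup>+x. ennreal (exp (\<alpha>' * nrm2 d (\<lambda>c. \<Sum>i<K. Z (x i) c))) \<partial>PiM {..<K} (\<lambda>_. D))"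
    by (rule nn_integral_cmult) (auto simp: nrm2_def vinner_def)
  also have "\<dots> \<le> ennreal (exp (\<alpha>*M2)) * ennreal (exp (2 * real K * \<alpha>' * M2))"
    using IH by (intro mult_left_mono) auto
  also have "\<dots> \<le> ennreal (exp (2 * real (Suc K) * \<alpha> * M2))"
  proof -
    define u where "u = \<alpha> * M2"
    have u0: "u \<ge> 0" unfolding u_def using Suc.prems M2nn by simp
    have "4 * real K * u \<le> 4 * real (Suc K) * u" by (intro mult_right_mono) (auto simp: u0)
    also have "\<dots> \<le> 1" using Suc.prems(2) by (simp add: u_def mult.assoc)
    finally have k1: "4 * real K * u \<le> 1" .
    have k2: "u * (4 * real K * u) \<le> u * 1" using k1 u0 by (rule mult_left_mono)
    have eq: "\<alpha>*M2 + 2 * real K * \<alpha>' * M2 = u + 2 * real K * u + u * (4 * real K * u)"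
      unfolding \<alpha>'_def u_def by (simp add: algebra_simps)
    have eq2: "2 * real (Suc K) * \<alpha> * M2 = 2 * real K * u + 2 * u"
      unfolding u_def by (simp add: algebra_simps)
    have "\<alpha>*M2 + 2 * real K * \<alpha>' * M2 \<le> 2 * real (Suc K) * \<alpha> * M2"
      unfolding eq eq2 using k2 by linarith
    thus ?thesis by (simp add: ennreal_mult[symmetric] exp_add[symmetric] del: of_nat_Suc)
  qed
  finally show ?case .
qed


lemma tail_fin:
  fixes D :: "'a measure" and Z :: "'a \<Rightarrow> nat \<Rightarrow> real"
  assumes D: "prob_space D" and meas[measurable]: "\<And>c. (\<lambda>z. Z z c) \<in> borel_measurable D"
    and bnd: "AE z in D. nrm2 d (Z z) \<le> M2"
    and mean: "\<And>c. c < d \<Longrightarrow> prob_space.expectation D (\<lambda>z. Z z c) = 0"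
    and N: "N > 0" and M2: "M2 > 0"
  shows "emeasure (PiM {..<N} (\<lambda>_. D)) {x \<in> space (PiM {..<N} (\<lambda>_. D)). nrm2 d (\<lambda>c. \<Sum>i<N. Z (x i) c) > t}
    \<le> ennreal (exp (1/2 - t / (4 * real N * M2)))"
proof -
  define \<alpha> where "\<alpha> = 1 / (4 * real N * M2)"
  have ap: "\<alpha> > 0" using N M2 by (simp add: \<alpha>_def)
  have ac: "4 * real N * \<alpha> * M2 \<le> 1" using N M2 by (simp add: \<alpha>_def)
  let ?P = "PiM {..<N} (\<lambda>_. D)"
  let ?A = "{x \<in> space ?P. nrm2 d (\<lambda>c. \<Sum>i<N. Z (x i) c) > t}"
  have Am: "?A \<in> sets ?P" by (simp add: nrm2_def vinner_def) 
  have "emeasure ?P ?A = (\<integral>\<^sup>+x. indicator ?A x \<partial>?P)"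
    using Am by simp
  also have "\<dots> \<le> (\<integral>\<^sup>+x. ennreal (exp (-\<alpha>*t)) * ennreal (exp (\<alpha> * nrm2 d (\<lambda>c. \<Sum>i<N. Z (x i) c))) \<partial>?P)"
  proof (rule nn_integral_mono)
    fix x
    show "indicator ?A x \<le> ennreal (exp (-\<alpha>*t)) * ennreal (exp (\<alpha> * nrm2 d (\<lambda>c. \<Sum>i<N. Z (x i) c)))"
    proof (cases "x \<in> ?A")
      case True
      hence "-\<alpha>*t + \<alpha> * nrm2 d (\<lambda>c. \<Sum>i<N. Z (x i) c) \<ge> 0" using ap
        by (simp add: algebra_simps mult_left_mono)
      hence "1 \<le> exp (-\<alpha>*t) * exp (\<alpha> * nrm2 d (\<lambda>c. \<Sum>i<N. Z (x i) c))"
        by (simp add: exp_add[symmetric])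
      thus ?thesis using True by (simp add: ennreal_mult[symmetric])
    qed simp
  qed
  also have "\<dots> = ennreal (exp (-\<alpha>*t)) * (\<integral>\<^sup>+x. ennreal (exp (\<alpha> * nrm2 d (\<lambda>c. \<Sum>i<N. Z (x i) c))) \<partial>?P)"
    by (rule nn_integral_cmult) (auto simp: nrm2_def vinner_def)
  also have "\<dots> \<le> ennreal (exp (-\<alpha>*t)) * ennreal (exp (2 * real N * \<alpha> * M2))"
    using conc_prod[OF D meas bnd mean ap ac] by (intro mult_left_mono) auto
  also have "\<dots> = ennreal (exp (1/2 - t / (4 * real N * M2)))"
    using N M2 by (simp add: ennreal_mult[symmetric] exp_add[symmetric] \<alpha>_def field_simps)
  finally show ?thesis .
qed

lemma tail_inf:
  fixes D :: "'a measure" and Z :: "'a \<Rightarrow> nat \<Rightarrow> real"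
  assumes D: "prob_space D" and meas[measurable]: "\<And>c. (\<lambda>z. Z z c) \<in> borel_measurable D"
    and bnd: "AE z in D. nrm2 d (Z z) \<le> M2"
    and mean: "\<And>c. c < d \<Longrightarrow> prob_space.expectation D (\<lambda>z. Z z c) = 0"
    and N: "N > 0" and M2: "M2 > 0"
  shows "emeasure (PiM UNIV (\<lambda>_::nat. D)) {x \<in> space (PiM UNIV (\<lambda>_::nat. D)). nrm2 d (\<lambda>c. \<Sum>i<N. Z (x i) c) > t}
    \<le> ennreal (exp (1/2 - t / (4 * real N * M2)))"
proof -
  interpret D: prob_space D by (rule D)
  interpret PP: product_prob_space "\<lambda>_::nat. D" UNIV
    by (simp add: product_prob_space_def product_prob_space_axioms_def product_sigma_finite_def
        D D.sigma_finite_measure_axioms)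
  let ?P = "PiM {..<N} (\<lambda>_. D)"
  let ?A = "{x \<in> space ?P. nrm2 d (\<lambda>c. \<Sum>i<N. Z (x i) c) > t}"
  have Am: "?A \<in> sets ?P" by (simp add: nrm2_def vinner_def)
  have "emeasure ?P ?A = emeasure (distr (PiM UNIV (\<lambda>_::nat. D)) ?P (\<lambda>x. restrict x {..<N})) ?A"
    by (subst PP.distr_PiM_restrict_finite) auto
  also have "\<dots> = emeasure (PiM UNIV (\<lambda>_::nat. D)) ((\<lambda>x. restrict x {..<N}) -` ?A \<inter> space (PiM UNIV (\<lambda>_::nat. D)))"
    by (rule emeasure_distr) (auto simp: Am intro!: measurable_restrict_subset)
  also have "(\<lambda>x. restrict x {..<N}) -` ?A \<inter> space (PiM UNIV (\<lambda>_::nat. D))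
     = {x \<in> space (PiM UNIV (\<lambda>_::nat. D)). nrm2 d (\<lambda>c. \<Sum>i<N. Z (x i) c) > t}"
    by (auto simp: space_PiM)
  finally show ?thesis using tail_fin[OF D meas bnd mean N M2, of t] by simp
qed


lemma normal_sq_nn:
  assumes s: "\<sigma> > 0"
  shows "(\<integral>\<^sup>+y. ennreal (y\<^sup>2) \<partial>density lborel (normal_density 0 \<sigma>)) = ennreal (\<sigma>\<^sup>2)"
proof -
  have "(\<integral>\<^sup>+y. ennreal (y\<^sup>2) \<partial>density lborel (normal_density 0 \<sigma>))
      = (\<integral>\<^sup>+y. ennreal (normal_density 0 \<sigma> y) * ennreal (y\<^sup>2) \<partial>lborel)"
    by (subst nn_integral_density) auto
  also have "\<dots> = (\<integral>\<^sup>+y. ennreal (normal_density 0 \<sigma> y * (y - 0)^(2*1)) \<partial>lborel)"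
    by (intro nn_integral_cong) (simp add: ennreal_mult normal_density_nonneg)
  also have "\<dots> = ennreal (integral\<^sup>L lborel (\<lambda>y. normal_density 0 \<sigma> y * (y - 0)^(2*1)))"
  proof (rule nn_integral_eq_integral)
    show "integrable lborel (\<lambda>y. normal_density 0 \<sigma> y * (y - 0)^(2*1))"
      using integrable_normal_moment[where \<mu>=0 and \<sigma>=\<sigma> and k="2*1"] s by simp
  qed (auto simp: normal_density_nonneg)
  also have "integral\<^sup>L lborel (\<lambda>y. normal_density 0 \<sigma> y * (y - 0)^(2*1)) = \<sigma>\<^sup>2"
    using integral_normal_moment_even[where \<mu>=0 and \<sigma>=\<sigma> and k=1] s by (simp add: power2_eq_square)
  finally show ?thesis .
qed

lemma gauss_nrm2:
  assumes s: "\<sigma> > 0"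
  shows "(\<integral>\<^sup>+w. ennreal (nrm2 d w) \<partial>gauss_init d \<sigma>) = ennreal (real d * \<sigma>\<^sup>2)"
proof -
  let ?N = "density lborel (normal_density 0 \<sigma>)"
  have N: "prob_space ?N" by (rule prob_space_normal_density) (rule s)
  interpret Nps: prob_space ?N by (rule N)
  interpret PP: product_prob_space "\<lambda>_::nat. ?N" "{..<d}"
    by (simp add: product_prob_space_def product_prob_space_axioms_def product_sigma_finite_def
        N Nps.sigma_finite_measure_axioms)
  have comp: "(\<integral>\<^sup>+w. ennreal ((w c)\<^sup>2) \<partial>gauss_init d \<sigma>) = ennreal (\<sigma>\<^sup>2)" if c: "c < d" for c
  proof -
    have "(\<integral>\<^sup>+w. ennreal ((w c)\<^sup>2) \<partial>gauss_init d \<sigma>)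
        = (\<integral>\<^sup>+y. ennreal (y\<^sup>2) \<partial>distr (gauss_init d \<sigma>) ?N (\<lambda>w. w c))"
      unfolding gauss_init_def
      by (subst nn_integral_distr) (auto simp: c)
    also have "distr (gauss_init d \<sigma>) ?N (\<lambda>w. w c) = ?N"
      unfolding gauss_init_def by (rule PP.PiM_component) (simp add: c)
    finally show ?thesis using normal_sq_nn[OF s] by simp
  qed
  have "(\<integral>\<^sup>+w. ennreal (nrm2 d w) \<partial>gauss_init d \<sigma>) = (\<integral>\<^sup>+w. (\<Sum>c<d. ennreal ((w c)\<^sup>2)) \<partial>gauss_init d \<sigma>)"
    unfolding nrm2_def vinner_def
    by (intro nn_integral_cong) (simp add: power2_eq_square sum_ennreal)
  also have "\<dots> = (\<Sum>c<d. (\<integral>\<^sup>+w. ennreal ((w c)\<^sup>2) \<partial>gauss_init d \<sigma>))"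
    by (rule nn_integral_sum) (auto simp: gauss_init_def)
  also have "\<dots> = (\<Sum>c<d. ennreal (\<sigma>\<^sup>2))" using comp by simp
  also have "\<dots> = ennreal (real d * \<sigma>\<^sup>2)" by (simp add: ennreal_of_nat_eq_real_of_nat ennreal_mult)
  finally show ?thesis .
qed

lemma gauss_tail:
  assumes s: "\<sigma> > 0" and e: "\<epsilon> > 0"
  shows "emeasure (gauss_init d \<sigma>) {w \<in> space (gauss_init d \<sigma>). nrm2 d w > \<epsilon>} \<le> ennreal (real d * \<sigma>\<^sup>2 / \<epsilon>)"
proof -
  let ?G = "gauss_init d \<sigma>"
  let ?A = "{w \<in> space ?G. nrm2 d w > \<epsilon>}"
  have Am: "?A \<in> sets ?G" by (simp add: nrm2_def vinner_def gauss_init_def)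
  have "emeasure ?G ?A = (\<integral>\<^sup>+x. indicator ?A x \<partial>?G)" using Am by simp
  also have "\<dots> \<le> (\<integral>\<^sup>+w. ennreal (1/\<epsilon>) * ennreal (nrm2 d w) \<partial>?G)"
  proof (rule nn_integral_mono)
    fix w
    show "indicator ?A w \<le> ennreal (1/\<epsilon>) * ennreal (nrm2 d w)"
    proof (cases "w \<in> ?A")
      case True
      hence "1 \<le> (1/\<epsilon>) * nrm2 d w" using e by (simp add: field_simps)
      hence "ennreal 1 \<le> ennreal ((1/\<epsilon>) * nrm2 d w)" by (rule ennreal_leI)
      also have "\<dots> = ennreal (1/\<epsilon>) * ennreal (nrm2 d w)"
        using e nrm2_nonneg[of d w] by (simp add: ennreal_mult[symmetric])
      finally show ?thesis using True by simp
    qed simp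
  qed
  also have "\<dots> = ennreal (1/\<epsilon>) * (\<integral>\<^sup>+w. ennreal (nrm2 d w) \<partial>?G)"
    by (rule nn_integral_cmult) (auto simp: nrm2_def vinner_def gauss_init_def)
  also have "\<dots> = ennreal (real d * \<sigma>\<^sup>2 / \<epsilon>)"
    using gauss_nrm2[OF s] e by (simp add: ennreal_mult[symmetric])
  finally show ?thesis .
qed


lemma space_inp: "space inp_space = UNIV"
  by (auto simp: inp_space_def space_PiM PiE_def extensional_def)

lemma meas_inp_comp: "(\<lambda>x::inp. x j c) \<in> borel_measurable inp_space"
proof -
  have a: "(\<lambda>x::inp. x j) \<in> measurable inp_space (PiM UNIV (\<lambda>_::nat. (borel :: real measure)))"
    unfolding inp_space_def by (rule measurable_component_singleton) simp
  have b: "(\<lambda>v::vec. v c) \<in> measurable (PiM UNIV (\<lambda>_::nat. (borel :: real measure))) borel"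
    by (rule measurable_component_singleton) simp
  show ?thesis using measurable_compose[OF a b] by simp
qed

lemma meas_patch[measurable]: "(\<lambda>z. fst z j c) \<in> borel_measurable sample_space"
proof -
  have "fst \<in> measurable sample_space inp_space" unfolding sample_space_def by simp
  thus ?thesis using measurable_compose[OF _ meas_inp_comp] by blast
qed

lemma meas_y[measurable]: "snd \<in> borel_measurable sample_space"
  unfolding sample_space_def by measurable

lemma pred_inp_eq: "{x::inp \<in> space inp_space. x j = v} \<in> sets inp_space"
proof -
  have "{x \<in> space inp_space. x j = v} = (\<Inter>c. {x \<in> space inp_space. x j c = v c}) \<inter> space inp_space"
    by auto
  also have "\<dots> \<in> sets inp_space"
  proof -
    note meas_inp_comp[measurable]
    have "\<And>c. {x \<in> space inp_space. x j c = v c} \<in> sets inp_space" by measurable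
    thus ?thesis by (intro sets.Int sets.countable_INT') auto
  qed
  finally show ?thesis .
qed

lemma pred_patch_eq[measurable]: "Measurable.pred sample_space (\<lambda>z. fst z (j::nat) = (v::vec))"
proof -
  have "fst \<in> measurable sample_space inp_space" unfolding sample_space_def by simp
  thus ?thesis using pred_sets1[OF pred_inp_eq] by blast
qed


definition Zd :: "nat \<Rightarrow> vec \<Rightarrow> vec \<Rightarrow> sample \<Rightarrow> nat \<Rightarrow> real" where
  "Zd n o1 o2 z c = snd z * (\<Sum>j<n. fst z j c) - (o1 c - o2 c)/2"

lemma sum_sq_le: "(\<Sum>j<n. a j)\<^sup>2 \<le> real n * (\<Sum>j<n. (a j)\<^sup>2)"
proof -
  have "\<bar>\<Sum>j<n. a j\<bar> \<le> (\<Sum>j<n. \<bar>a j\<bar> * \<bar>1\<bar>)" by (simp add: sum_abs)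
  also have "\<dots> \<le> L2_set a {..<n} * L2_set (\<lambda>_. 1::real) {..<n}" by (rule L2_set_mult_ineq)
  also have "\<dots> = sqrt (\<Sum>j<n. (a j)\<^sup>2) * sqrt (real n)" by (simp add: L2_set_def)
  finally have h: "\<bar>\<Sum>j<n. a j\<bar> \<le> sqrt (\<Sum>j<n. (a j)\<^sup>2) * sqrt (real n)" .
  have "(\<Sum>j<n. a j)\<^sup>2 = \<bar>\<Sum>j<n. a j\<bar>\<^sup>2" by simp
  also have "\<dots> \<le> (sqrt (\<Sum>j<n. (a j)\<^sup>2) * sqrt (real n))\<^sup>2"
    using h by (intro power_mono) auto
  also have "\<dots> = real n * (\<Sum>j<n. (a j)\<^sup>2)"
    by (simp add: power_mult_distrib sum_nonneg)
  finally show ?thesis .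
qed

lemma sq_diff_le: "(a - b)\<^sup>2 \<le> 2*a\<^sup>2 + 2*(b::real)\<^sup>2"
proof -
  have h: "0 \<le> (a+b)*(a+b)" by simp
  have e1: "(a-b)*(a-b) = a*a - 2*(a*b) + b*b" by (simp add: algebra_simps)
  have e2: "(a+b)*(a+b) = a*a + 2*(a*b) + b*b" by (simp add: algebra_simps)
  have "(a - b)\<^sup>2 = (a-b)*(a-b)" "a\<^sup>2 = a*a" "b\<^sup>2 = b*b" by (simp_all add: power2_eq_square)
  then show ?thesis using h e1 e2 by linarith
qed

lemma nrm2_patch_sum:
  assumes "\<And>j. j < n \<Longrightarrow> vinner d (x j) (x j) = 1"
  shows "nrm2 d (\<lambda>c. \<Sum>j<n. x j c) \<le> (real n)\<^sup>2"
proof -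
  have "nrm2 d (\<lambda>c. \<Sum>j<n. x j c) = (\<Sum>c<d. (\<Sum>j<n. x j c)\<^sup>2)"
    unfolding nrm2_def vinner_def by (simp add: power2_eq_square)
  also have "\<dots> \<le> (\<Sum>c<d. real n * (\<Sum>j<n. (x j c)\<^sup>2))"
    by (intro sum_mono sum_sq_le)
  also have "\<dots> = real n * (\<Sum>j<n. (\<Sum>c<d. (x j c)\<^sup>2))"
    by (simp add: sum_distrib_left sum.swap[of _ "{..<d}"])
  also have "\<dots> = real n * (\<Sum>j<n. 1)"
    using assms by (simp add: vinner_def power2_eq_square)
  finally show ?thesis by (simp add: power2_eq_square)
qed

lemma Zd_bound:
  assumes y: "y = 1 \<or> y = -1" and u: "\<And>j. j < n \<Longrightarrow> vinner d (x j) (x j) = 1"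
    and o1: "vinner d o1 o1 = 1" and o2: "vinner d o2 o2 = 1" and n: "n \<ge> 1"
  shows "nrm2 d (Zd n o1 o2 (x, y)) \<le> 4 * (real n)\<^sup>2"
proof -
  have pw: "(Zd n o1 o2 (x, y) c)\<^sup>2 \<le> 2 * (\<Sum>j<n. x j c)\<^sup>2 + ((o1 c)\<^sup>2 + (o2 c)\<^sup>2)" for c
  proof -
    have y2: "y\<^sup>2 = 1" using y by auto
    have "(Zd n o1 o2 (x, y) c)\<^sup>2 = (y * (\<Sum>j<n. x j c) - (o1 c - o2 c)/2)\<^sup>2" by (simp add: Zd_def)
    also have "\<dots> \<le> 2 * (y * (\<Sum>j<n. x j c))\<^sup>2 + 2 * ((o1 c - o2 c)/2)\<^sup>2"
      by (rule sq_diff_le)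
    also have "\<dots> \<le> 2 * (\<Sum>j<n. x j c)\<^sup>2 + ((o1 c)\<^sup>2 + (o2 c)\<^sup>2)"
    proof -
      have "(y * (\<Sum>j<n. x j c))\<^sup>2 = (\<Sum>j<n. x j c)\<^sup>2" using y2 by (simp add: power_mult_distrib)
      moreover have "2 * ((o1 c - o2 c)/2)\<^sup>2 = (o1 c - o2 c)\<^sup>2 / 2" by (simp add: power_divide)
      moreover have "(o1 c - o2 c)\<^sup>2 \<le> 2*(o1 c)\<^sup>2 + 2*(o2 c)\<^sup>2" by (rule sq_diff_le)
      ultimately show ?thesis by linarith
    qed
    finally show ?thesis .
  qed
  have "nrm2 d (Zd n o1 o2 (x, y)) = (\<Sum>c<d. (Zd n o1 o2 (x, y) c)\<^sup>2)"
    unfolding nrm2_def vinner_def by (simp add: power2_eq_square)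
  also have "\<dots> \<le> (\<Sum>c<d. 2 * (\<Sum>j<n. x j c)\<^sup>2 + ((o1 c)\<^sup>2 + (o2 c)\<^sup>2))"
    by (intro sum_mono pw)
  also have "\<dots> = 2 * nrm2 d (\<lambda>c. \<Sum>j<n. x j c) + (vinner d o1 o1 + vinner d o2 o2)"
    unfolding nrm2_def vinner_def by (simp add: sum.distrib sum_distrib_left power2_eq_square)
  also have "\<dots> \<le> 2 * (real n)\<^sup>2 + 2"
    using nrm2_patch_sum[of n d x, OF u] o1 o2 by simp
  also have "\<dots> \<le> 4 * (real n)\<^sup>2"
  proof -
    have "1 \<le> (real n)\<^sup>2" using n by (simp add: one_le_power)
    thus ?thesis by linarith
  qed
  finally show ?thesis .
qed


lemma dm_basic:
  assumes dm: "data_model cS n d p \<delta>d \<delta>r o1 o2 S D X lstar"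
  shows "vinner d o1 o1 = 1" "vinner d o2 o2 = 1" "\<delta>d = vinner d o1 o2" "-1 < \<delta>d" "\<delta>d < 1"
    "prob_space D" "sets D = sets sample_space" "X \<in> sets D" "emeasure D X = 1"
    "measure D {z \<in> space D. snd z = 1} = 1/2" "measure D {z \<in> space D. snd z = -1} = 1/2"
    "\<delta>r < 1"
  using dm unfolding data_model_def unit_vec_def by auto

lemma dm_struct:
  assumes dm: "data_model cS n d p \<delta>d \<delta>r o1 o2 S D X lstar" and zX: "(x, y) \<in> X"
  shows "y = 1 \<or> y = -1"
    and "\<exists>j0<n. x j0 = (if y = 1 then o1 else o2) \<and>
          (\<forall>j'<n. j' \<noteq> j0 \<longrightarrow> vinner d (x j') (x j') = 1 \<and> x j' \<noteq> o1 \<and> x j' \<noteq> o2 \<and> (\<exists>k<p. x j' \<in> S k))"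
    and "\<And>j. j < n \<Longrightarrow> vinner d (x j) (x j) = 1"
    and "card {j. j < n \<and> (\<exists>k<p. x j \<in> S k) \<and> \<bar>vinner d (\<lambda>i. o1 i - o2 i) (x j)\<bar> > (1 - \<delta>d) / 2} < lstar"
proof -
  have u1: "vinner d o1 o1 = 1" and u2: "vinner d o2 o2 = 1" and dr: "\<delta>r < 1"
    using dm_basic[OF dm] by auto
  have Su: "\<And>j q. j < p \<Longrightarrow> q \<in> S j \<Longrightarrow> vinner d q q = 1"
    using dm unfolding data_model_def unit_vec_def by blast
  have Sr: "\<And>j q. j < p \<Longrightarrow> q \<in> S j \<Longrightarrow> \<bar>vinner d o1 q\<bar> \<le> \<delta>r \<and> \<bar>vinner d o2 q\<bar> \<le> \<delta>r"
    using dm unfolding data_model_def by blast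
  have X: "(y = 1 \<or> y = -1) \<and>
        (\<exists>j<n. x j = (if y = 1 then o1 else o2) \<and>
           (\<forall>j'<n. j' \<noteq> j \<longrightarrow> (\<exists>k<p. x j' \<in> S k))) \<and>
        card {j. j < n \<and> (\<exists>k<p. x j \<in> S k) \<and>
                 \<bar>vinner d (\<lambda>i. o1 i - o2 i) (x j)\<bar> > (1 - \<delta>d) / 2} < lstar"
    using dm zX unfolding data_model_def by fast
  show "y = 1 \<or> y = -1" using X by blast
  show "card {j. j < n \<and> (\<exists>k<p. x j \<in> S k) \<and> \<bar>vinner d (\<lambda>i. o1 i - o2 i) (x j)\<bar> > (1 - \<delta>d) / 2} < lstar"
    using X by blast
  obtain j0 where j0: "j0 < n" "x j0 = (if y = 1 then o1 else o2)"
    "\<forall>j'<n. j' \<noteq> j0 \<longrightarrow> (\<exists>k<p. x j' \<in> S k)" using X by blast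
  have oth: "vinner d (x j') (x j') = 1 \<and> x j' \<noteq> o1 \<and> x j' \<noteq> o2 \<and> (\<exists>k<p. x j' \<in> S k)"
    if jn: "j' < n" "j' \<noteq> j0" for j'
  proof -
    obtain k where k: "k < p" "x j' \<in> S k" using j0(3) jn by blast
    have "vinner d (x j') (x j') = 1" using Su k by blast
    moreover have "x j' \<noteq> o1" using Sr[OF k] u1 dr by auto
    moreover have "x j' \<noteq> o2" using Sr[OF k] u2 dr by auto
    ultimately show ?thesis using k by blast
  qed
  show "\<exists>j0<n. x j0 = (if y = 1 then o1 else o2) \<and>
          (\<forall>j'<n. j' \<noteq> j0 \<longrightarrow> vinner d (x j') (x j') = 1 \<and> x j' \<noteq> o1 \<and> x j' \<noteq> o2 \<and> (\<exists>k<p. x j' \<in> S k))"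
    using j0 oth by blast
  show "vinner d (x j) (x j) = 1" if "j < n" for j
    using oth[OF that] j0 u1 u2 by (cases "j = j0") auto
qed

lemma dm_AE_X:
  assumes dm: "data_model cS n d p \<delta>d \<delta>r o1 o2 S D X lstar"
  shows "AE z in D. z \<in> X"
proof -
  interpret prob_space D using dm_basic[OF dm] by auto
  have "X \<in> sets D" "emeasure D X = 1" using dm_basic[OF dm] by auto
  thus ?thesis by (intro AE_prob_1) (auto simp: emeasure_eq_measure)
qed

lemma dm_meas:
  assumes dm: "data_model cS n d p \<delta>d \<delta>r o1 o2 S D X lstar"
  shows "(\<lambda>z. Zd n o1 o2 z c) \<in> borel_measurable D"
proof -
  have sD: "sets D = sets sample_space" using dm_basic[OF dm] by auto
  have "(\<lambda>z. Zd n o1 o2 z c) \<in> borel_measurable sample_space" unfolding Zd_def by measurable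
  thus ?thesis by (simp add: measurable_cong_sets[OF sD refl])
qed

lemma dm_bound:
  assumes dm: "data_model cS n d p \<delta>d \<delta>r o1 o2 S D X lstar" and n: "n \<ge> 1"
  shows "AE z in D. nrm2 d (Zd n o1 o2 z) \<le> 4 * (real n)\<^sup>2"
  using dm_AE_X[OF dm]
proof eventually_elim
  case (elim z)
  obtain x y where z: "z = (x, y)" by (cases z)
  show ?case unfolding z
    by (rule Zd_bound) (use dm_struct[OF dm elim[unfolded z]] dm_basic[OF dm] n in auto)
qed


lemma perm_inv_sum:
  "perm_invariant n {x \<in> space inp_space. (\<Sum>j<n. x j c) \<in> U}"
  unfolding perm_invariant_def
proof (intro allI impI)
  fix \<pi> and x :: inp
  assume \<pi>: "\<pi> permutes {..<n}"
  have "(\<Sum>j<n. (x \<circ> \<pi>) j c) = (\<Sum>j<n. x j c)"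
    using sum.permute[OF \<pi>, of "\<lambda>j. x j c"] by (simp add: comp_def)
  thus "(x \<in> {x \<in> space inp_space. (\<Sum>j<n. x j c) \<in> U}) =
        (x \<circ> \<pi> \<in> {x \<in> space inp_space. (\<Sum>j<n. x j c) \<in> U})"
    by (simp add: space_inp)
qed

lemma dm_mean:
  assumes dm: "data_model cS n d p \<delta>d \<delta>r o1 o2 S D X lstar" and c: "c < d"
  shows "prob_space.expectation D (\<lambda>z. Zd n o1 o2 z c) = 0"
proof -
  interpret prob_space D using dm_basic[OF dm] by auto
  have sD: "sets D = sets sample_space" using dm_basic[OF dm] by auto
  have mD: "f \<in> borel_measurable D" if "f \<in> borel_measurable sample_space" for f :: "sample \<Rightarrow> real"
    using that by (simp add: measurable_cong_sets[OF sD refl])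
  have sD': "space D = space sample_space" using sets_eq_imp_space_eq[OF sD] .
  define R where "R z = (\<Sum>j<n. if fst z j \<noteq> o1 \<and> fst z j \<noteq> o2 then fst z j c else 0)" for z :: sample
  have Rirr: "(\<Sum>j<n. irr_part n o1 o2 x j c) = R (x, y)" for x y
    unfolding R_def irr_part_def by (intro sum.cong) auto
  have Rm: "R \<in> borel_measurable D" by (rule mD) (unfold R_def, measurable)
  define fp where "fp z = (if snd z = 1 then R z else 0)" for z :: sample
  define fm where "fm z = (if snd z = -1 then R z else 0)" for z :: sample
  have fpe: "fp = (\<lambda>z. if snd z = 1 then R z else 0)" by (simp add: fun_eq_iff fp_def)
  have fme: "fm = (\<lambda>z. if snd z = -1 then R z else 0)" by (simp add: fun_eq_iff fm_def)
  have fpm[measurable]: "fp \<in> borel_measurable D" by (rule mD) (unfold fp_def R_def, measurable)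
  have fmm[measurable]: "fm \<in> borel_measurable D" by (rule mD) (unfold fm_def R_def, measurable)
  have Rb: "AE z in D. \<bar>R z\<bar> \<le> real n"
    using dm_AE_X[OF dm]
  proof eventually_elim
    case (elim z)
    obtain x y where z: "z = (x, y)" by (cases z)
    have u: "\<And>j. j < n \<Longrightarrow> vinner d (x j) (x j) = 1" using dm_struct(3)[OF dm elim[unfolded z]] .
    have "\<bar>R z\<bar> \<le> (\<Sum>j<n. \<bar>if x j \<noteq> o1 \<and> x j \<noteq> o2 then x j c else 0\<bar>)"
      unfolding R_def z fst_conv by (rule sum_abs)
    also have "\<dots> \<le> (\<Sum>j<n. 1)"
    proof (intro sum_mono)
      fix j assume "j \<in> {..<n}"
      hence "(x j c)\<^sup>2 \<le> 1" using coord_sq_le[OF c, of "x j"] u unfolding nrm2_def by auto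
      hence "\<bar>x j c\<bar> \<le> 1" by (simp add: abs_square_le_1)
      thus "\<bar>if x j \<noteq> o1 \<and> x j \<noteq> o2 then x j c else 0\<bar> \<le> 1" by auto
    qed
    finally show ?case by simp
  qed
  have ifp: "integrable D fp"
    by (rule integrable_const_bound[where B="real n"]) (use Rb in \<open>auto simp: fp_def\<close>)
  have ifm: "integrable D fm"
    by (rule integrable_const_bound[where B="real n"]) (use Rb in \<open>auto simp: fm_def\<close>)
  define Y1 where "Y1 = {z \<in> space D. snd z = 1}"
  define Ym where "Ym = {z \<in> space D. snd z = -1}"
  have Y1m[measurable]: "Y1 \<in> sets D" unfolding Y1_def
    using mD[OF meas_y] by measurable
  have Ymm[measurable]: "Ym \<in> sets D" unfolding Ym_def
    using mD[OF meas_y] by measurable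
  have pY1: "measure D Y1 = 1/2" and pYm: "measure D Ym = 1/2"
    using dm_basic[OF dm] by (auto simp: Y1_def Ym_def)
  have hyp: "\<And>A. A \<in> sets inp_space \<Longrightarrow> perm_invariant n A \<Longrightarrow>
        measure D {z \<in> space D. snd z = 1 \<and> irr_part n o1 o2 (fst z) \<in> A} =
        measure D {z \<in> space D. snd z = -1 \<and> irr_part n o1 o2 (fst z) \<in> A}"
    using dm unfolding data_model_def by blast
  have pre: "f -` U \<inter> space D = {z \<in> space D. snd z = v \<and> R z \<in> U} \<union> (if 0 \<in> U then space D - {z \<in> space D. snd z = v} else {})"
    if "f = (\<lambda>z. if snd z = v then R z else 0)" for f v and U :: "real set"
    using that by (auto split: if_splits)
  have mpart: "measure D (f -` U \<inter> space D) = measure D {z \<in> space D. snd z = v \<and> R z \<in> U} + (if 0 \<in> U then 1/2 else 0)"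
    if f: "f = (\<lambda>z. if snd z = v then R z else 0)" and U: "U \<in> sets borel"
      and Yv: "{z \<in> space D. snd z = v} \<in> sets D" "measure D {z \<in> space D. snd z = v} = 1/2"
    for f v and U :: "real set"
  proof -
    have m1: "{z \<in> space D. snd z = v \<and> R z \<in> U} \<in> sets D"
      using Rm U mD[OF meas_y] by measurable
    show ?thesis
    proof (cases "0 \<in> U")
      case True
      have "measure D (f -` U \<inter> space D) = measure D {z \<in> space D. snd z = v \<and> R z \<in> U} + measure D (space D - {z \<in> space D. snd z = v})"
        unfolding pre[OF f] using True m1 Yv by (simp, intro finite_measure_Union) auto
      also have "measure D (space D - {z \<in> space D. snd z = v}) = 1/2"
        using prob_compl[OF Yv(1)] Yv(2) by simp
      finally show ?thesis using True by simp
    next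
      case False
      thus ?thesis unfolding pre[OF f] by simp
    qed
  qed
  have distr_eq: "distr D borel fp = distr D borel fm"
  proof (rule measure_eqI)
    fix U :: "real set" assume U: "U \<in> sets (distr D borel fp)"
    hence U': "U \<in> sets borel" by simp
    define A where "A = {x \<in> space inp_space. (\<Sum>j<n. x j c) \<in> U}"
    note meas_inp_comp[measurable]
    have Am: "A \<in> sets inp_space" unfolding A_def using U' by measurable
    have e1: "{z \<in> space D. snd z = v \<and> irr_part n o1 o2 (fst z) \<in> A} = {z \<in> space D. snd z = v \<and> R z \<in> U}" for v
      unfolding A_def by (auto simp: space_inp Rirr[symmetric])
    have eqm: "measure D {z \<in> space D. snd z = 1 \<and> R z \<in> U} = measure D {z \<in> space D. snd z = -1 \<and> R z \<in> U}"
      using hyp[OF Am perm_inv_sum[of n c U, folded A_def]] unfolding e1 .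
    have "measure D (fp -` U \<inter> space D) = measure D (fm -` U \<inter> space D)"
      using mpart[OF fpe U' Y1m[unfolded Y1_def] pY1[unfolded Y1_def]]
        mpart[OF fme U' Ymm[unfolded Ym_def] pYm[unfolded Ym_def]] eqm by simp
    thus "emeasure (distr D borel fp) U = emeasure (distr D borel fm) U"
      using U' by (simp add: emeasure_distr emeasure_eq_measure)
  qed simp
  have Ieq: "integral\<^sup>L D fp = integral\<^sup>L D fm"
  proof -
    have "integral\<^sup>L D fp = integral\<^sup>L (distr D borel fp) (\<lambda>t. t)"
      by (rule integral_distr[symmetric]) auto
    also have "\<dots> = integral\<^sup>L (distr D borel fm) (\<lambda>t. t)" by (simp add: distr_eq)
    also have "\<dots> = integral\<^sup>L D fm"
      by (rule integral_distr) auto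
    finally show ?thesis .
  qed
  define g where "g z = (indicator Y1 z * o1 c - indicator Ym z * o2 c - (o1 c - o2 c)/2) + (fp z - fm z)" for z
  have AEg: "AE z in D. Zd n o1 o2 z c = g z"
    using dm_AE_X[OF dm]
  proof eventually_elim
    case (elim z)
    obtain x y where z: "z = (x, y)" by (cases z)
    have zs: "z \<in> space D" using elim dm_basic(8)[OF dm] sets.sets_into_space by blast
    note st = dm_struct[OF dm elim[unfolded z]]
    obtain j0 where j0: "j0 < n" "x j0 = (if y = 1 then o1 else o2)"
      "\<forall>j'<n. j' \<noteq> j0 \<longrightarrow> vinner d (x j') (x j') = 1 \<and> x j' \<noteq> o1 \<and> x j' \<noteq> o2 \<and> (\<exists>k<p. x j' \<in> S k)"
      using st(2) by blast
    have Rz: "R z = (\<Sum>j<n. if j = j0 then 0 else x j c)"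
      unfolding R_def z using j0 by (intro sum.cong) auto
    have vs: "(\<Sum>j<n. x j c) = x j0 c + R z"
    proof -
      have "(\<Sum>j<n. x j c) = (\<Sum>j<n. (if j = j0 then x j c else 0) + (if j = j0 then 0 else x j c))"
        by (intro sum.cong) auto
      also have "\<dots> = x j0 c + R z" unfolding Rz sum.distrib using j0(1) by simp
      finally show ?thesis .
    qed
    have ne: "(1::real) \<noteq> -1" by simp
    show ?case
    proof (cases "y = 1")
      case True
      thus ?thesis using zs j0(2) vs unfolding g_def Zd_def z fp_def fm_def Y1_def Ym_def
        by (simp add: indicator_def)
    next
      case False
      hence ym: "y = -1" using st(1) by blast
      thus ?thesis using zs j0(2) vs unfolding g_def Zd_def z fp_def fm_def Y1_def Ym_def
        by (simp add: indicator_def algebra_simps)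
    qed
  qed
  have "prob_space.expectation D (\<lambda>z. Zd n o1 o2 z c) = integral\<^sup>L D g"
  proof (rule integral_cong_AE)
    show "g \<in> borel_measurable D" unfolding g_def by measurable
  qed (use AEg dm_meas[OF dm] in auto)
  also have "\<dots> = (measure D Y1 * o1 c - measure D Ym * o2 c - (o1 c - o2 c)/2) + (integral\<^sup>L D fp - integral\<^sup>L D fm)"
  proof -
    have fin: "emeasure D A < \<infinity>" if "A \<in> sets D" for A
      by (simp add: less_top[symmetric])
    have hb1: "has_bochner_integral D (indicator Y1) (measure D Y1)"
      by (rule has_bochner_integral_real_indicator[OF Y1m fin[OF Y1m]])
    have hbm: "has_bochner_integral D (indicator Ym) (measure D Ym)"
      by (rule has_bochner_integral_real_indicator[OF Ymm fin[OF Ymm]])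
    have i1: "integrable D (\<lambda>z. indicator Y1 z * o1 c :: real)"
      using hb1 by (intro integrable_mult_left) (use integrable.intros in blast)
    have im: "integrable D (\<lambda>z. indicator Ym z * o2 c :: real)"
      using hbm by (intro integrable_mult_left) (use integrable.intros in blast)
    have I1: "integral\<^sup>L D (\<lambda>z. indicator Y1 z * o1 c :: real) = measure D Y1 * o1 c"
      using has_bochner_integral_integral_eq[OF hb1] by (simp add: integral_mult_left_zero)
    have Im: "integral\<^sup>L D (\<lambda>z. indicator Ym z * o2 c :: real) = measure D Ym * o2 c"
      using has_bochner_integral_integral_eq[OF hbm] by (simp add: integral_mult_left_zero)
    have i12: "integrable D (\<lambda>z. indicator Y1 z * o1 c - indicator Ym z * o2 c :: real)"
      using i1 im by auto
    have i123: "integrable D (\<lambda>z. indicator Y1 z * o1 c - indicator Ym z * o2 c - (o1 c - o2 c)/2 :: real)"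
      using i12 by auto
    have "integral\<^sup>L D g = integral\<^sup>L D (\<lambda>z. indicator Y1 z * o1 c - indicator Ym z * o2 c - (o1 c - o2 c)/2)
          + integral\<^sup>L D (\<lambda>z. fp z - fm z)"
      unfolding g_def using i123 ifp ifm by (intro Bochner_Integration.integral_add) auto
    also have "integral\<^sup>L D (\<lambda>z. fp z - fm z) = integral\<^sup>L D fp - integral\<^sup>L D fm"
      using ifp ifm by (rule Bochner_Integration.integral_diff)
    also have "integral\<^sup>L D (\<lambda>z. indicator Y1 z * o1 c - indicator Ym z * o2 c - (o1 c - o2 c)/2)
        = integral\<^sup>L D (\<lambda>z. indicator Y1 z * o1 c - indicator Ym z * o2 c) - (o1 c - o2 c)/2"
      using i12 by (subst Bochner_Integration.integral_diff) (auto simp: prob_space)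
    also have "integral\<^sup>L D (\<lambda>z. indicator Y1 z * o1 c - indicator Ym z * o2 c :: real)
        = measure D Y1 * o1 c - measure D Ym * o2 c"
      using i1 im I1 Im by (subst Bochner_Integration.integral_diff) auto
    finally show ?thesis .
  qed
  also have "\<dots> = 0" unfolding pY1 pYm Ieq by (simp add: field_simps)
  finally show ?thesis .
qed


definition Ev :: "nat \<Rightarrow> nat \<Rightarrow> vec \<Rightarrow> vec \<Rightarrow> nat \<Rightarrow> real \<Rightarrow> real \<Rightarrow> real \<Rightarrow> sample measure
   \<Rightarrow> ((vec \<times> vec) \<times> (nat \<Rightarrow> sample)) set" where
  "Ev n d o1 o2 N \<sigma> e1 e2 D = {\<omega> \<in> space (train_space d \<sigma> D).
     nrm2 d (fst (fst \<omega>)) \<le> e1 \<and> nrm2 d (snd (fst \<omega>)) \<le> e1 \<and>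
     nrm2 d (\<lambda>c. \<Sum>i<N. Zd n o1 o2 (snd \<omega> i) c) \<le> e2}"

lemma prob_part:
  assumes dm: "data_model cS n d p \<delta>d \<delta>r o1 o2 S D X lstar" and n: "n \<ge> 1"
    and s: "\<sigma> > 0" and e1: "e1 > 0" and N: "N > 0"
  shows "Ev n d o1 o2 N \<sigma> e1 e2 D \<in> sets (train_space d \<sigma> D)"
    and "measure (train_space d \<sigma> D) (Ev n d o1 o2 N \<sigma> e1 e2 D)
          \<ge> 1 - (2 * (real d * \<sigma>\<^sup>2 / e1) + exp (1/2 - e2 / (4 * real N * (4 * (real n)\<^sup>2))))"
proof -
  have Dp: "prob_space D" using dm_basic[OF dm] by auto
  have Zm[measurable]: "\<And>c. (\<lambda>z. Zd n o1 o2 z c) \<in> borel_measurable D" using dm_meas[OF dm] .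
  let ?G = "gauss_init d \<sigma>"
  let ?P = "PiM UNIV (\<lambda>_::nat. D)"
  let ?TS = "train_space d \<sigma> D"
  have Gp: "prob_space ?G" unfolding gauss_init_def
    by (rule prob_space_PiM) (use prob_space_normal_density s in auto)
  have Pp: "prob_space ?P" by (rule prob_space_PiM) (use Dp in auto)
  interpret G: prob_space ?G by (rule Gp)
  interpret P: prob_space ?P by (rule Pp)
  have GGp: "prob_space (?G \<Otimes>\<^sub>M ?G)" by (rule prob_space_pair) (use Gp in auto)
  interpret GG: prob_space "?G \<Otimes>\<^sub>M ?G" by (rule GGp)
  have TSp: "prob_space ?TS" unfolding train_space_def by (rule prob_space_pair) (use GGp Pp in auto)
  interpret TS: prob_space ?TS by (rule TSp)
  define A1 where "A1 = {w \<in> space ?G. nrm2 d w > e1}"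
  define A3 where "A3 = {x \<in> space ?P. nrm2 d (\<lambda>c. \<Sum>i<N. Zd n o1 o2 (x i) c) > e2}"
  have A1m: "A1 \<in> sets ?G" unfolding A1_def gauss_init_def nrm2_def vinner_def by measurable
  have A3m: "A3 \<in> sets ?P" unfolding A3_def nrm2_def vinner_def by measurable
  define B1 where "B1 = (A1 \<times> space ?G) \<times> space ?P"
  define B2 where "B2 = (space ?G \<times> A1) \<times> space ?P"
  define B3 where "B3 = (space ?G \<times> space ?G) \<times> A3"
  have B1m: "B1 \<in> sets ?TS" unfolding B1_def train_space_def using A1m by auto
  have B2m: "B2 \<in> sets ?TS" unfolding B2_def train_space_def using A1m by auto
  have B3m: "B3 \<in> sets ?TS" unfolding B3_def train_space_def using A3m by auto
  have spTS: "space ?TS = (space ?G \<times> space ?G) \<times> space ?P"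
    unfolding train_space_def by (simp add: space_pair_measure)
  have Edef: "Ev n d o1 o2 N \<sigma> e1 e2 D = space ?TS - (B1 \<union> B2 \<union> B3)"
    unfolding Ev_def B1_def B2_def B3_def A1_def A3_def spTS by auto
  show Em: "Ev n d o1 o2 N \<sigma> e1 e2 D \<in> sets ?TS"
    unfolding Edef using B1m B2m B3m by auto
  have eA1: "emeasure ?G A1 \<le> ennreal (real d * \<sigma>\<^sup>2 / e1)"
    unfolding A1_def by (rule gauss_tail[OF s e1])
  have eA3: "emeasure ?P A3 \<le> ennreal (exp (1/2 - e2 / (4 * real N * (4 * (real n)\<^sup>2))))"
    unfolding A3_def
  proof (rule tail_inf[OF Dp Zm dm_bound[OF dm n] dm_mean[OF dm] N])
    have "real n > 0" using n by simp
    thus "0 < 4 * (real n)\<^sup>2" by simp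
  qed
  have mB1: "TS.prob B1 \<le> real d * \<sigma>\<^sup>2 / e1"
  proof -
    have "emeasure ?TS B1 = emeasure (?G \<Otimes>\<^sub>M ?G) (A1 \<times> space ?G) * emeasure ?P (space ?P)"
      unfolding B1_def train_space_def using A1m
      by (intro P.emeasure_pair_measure_Times) auto
    also have "\<dots> = emeasure ?G A1"
      using A1m by (simp add: G.emeasure_pair_measure_Times G.emeasure_space_1 P.emeasure_space_1)
    finally have "emeasure ?TS B1 \<le> ennreal (real d * \<sigma>\<^sup>2 / e1)" using eA1 by simp
    thus ?thesis using e1 s by (simp add: TS.emeasure_eq_measure)
  qed
  have mB2: "TS.prob B2 \<le> real d * \<sigma>\<^sup>2 / e1"
  proof -
    have "emeasure ?TS B2 = emeasure (?G \<Otimes>\<^sub>M ?G) (space ?G \<times> A1) * emeasure ?P (space ?P)"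
      unfolding B2_def train_space_def using A1m
      by (intro P.emeasure_pair_measure_Times) auto
    also have "\<dots> = emeasure ?G A1"
      using A1m by (simp add: G.emeasure_pair_measure_Times G.emeasure_space_1 P.emeasure_space_1)
    finally have "emeasure ?TS B2 \<le> ennreal (real d * \<sigma>\<^sup>2 / e1)" using eA1 by simp
    thus ?thesis using e1 s by (simp add: TS.emeasure_eq_measure)
  qed
  have mB3: "TS.prob B3 \<le> exp (1/2 - e2 / (4 * real N * (4 * (real n)\<^sup>2)))"
  proof -
    have "emeasure ?TS B3 = emeasure (?G \<Otimes>\<^sub>M ?G) (space ?G \<times> space ?G) * emeasure ?P A3"
      unfolding B3_def train_space_def using A3m
      by (intro P.emeasure_pair_measure_Times) auto
    also have "\<dots> = emeasure ?P A3"
      using GG.emeasure_space_1 by (simp add: space_pair_measure)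
    finally have "emeasure ?TS B3 \<le> ennreal (exp (1/2 - e2 / (4 * real N * (4 * (real n)\<^sup>2))))" using eA3 by simp
    thus ?thesis by (simp add: TS.emeasure_eq_measure)
  qed
  have "TS.prob (B1 \<union> B2 \<union> B3) \<le> TS.prob B1 + TS.prob B2 + TS.prob B3"
  proof -
    have "TS.prob (B1 \<union> B2 \<union> B3) \<le> TS.prob (B1 \<union> B2) + TS.prob B3"
      using B1m B2m B3m by (intro measure_Un_le) auto
    moreover have "TS.prob (B1 \<union> B2) \<le> TS.prob B1 + TS.prob B2"
      using B1m B2m by (intro measure_Un_le) auto
    ultimately show ?thesis by linarith
  qed
  moreover have "TS.prob (Ev n d o1 o2 N \<sigma> e1 e2 D) = 1 - TS.prob (B1 \<union> B2 \<union> B3)"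
    unfolding Edef using B1m B2m B3m by (intro TS.prob_compl) auto
  ultimately show "TS.prob (Ev n d o1 o2 N \<sigma> e1 e2 D)
          \<ge> 1 - (2 * (real d * \<sigma>\<^sup>2 / e1) + exp (1/2 - e2 / (4 * real N * (4 * (real n)\<^sup>2))))"
    using mB1 mB2 mB3 by linarith
qed


lemma exp_half_le2: "exp (1/2::real) \<le> 2"
proof -
  have "exp (1/2::real) * exp (1/2) = exp 1" by (simp add: exp_add[symmetric])
  also have "\<dots> \<le> 3" by (rule exp_le)
  finally have h: "exp (1/2::real) * exp (1/2) \<le> 3" .
  show ?thesis
  proof (rule ccontr)
    assume "\<not> exp (1/2::real) \<le> 2"
    hence "2 < exp (1/2::real)" by simp
    hence "2 * 2 < exp (1/2::real) * exp (1/2)" by (intro mult_strict_mono) auto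
    thus False using h by simp
  qed
qed

lemma ln_ge_half: "n \<ge> 2 \<Longrightarrow> ln (real n) \<ge> 1/2"
proof -
  assume n: "n \<ge> 2"
  have "1/2 = ln (exp (1/2::real))" by simp
  also have "\<dots> \<le> ln 2" using exp_half_le2 by (subst ln_le_cancel_iff) auto
  also have "\<dots> \<le> ln (real n)" using n by (subst ln_le_cancel_iff) auto
  finally show ?thesis .
qed

lemma arith_bound:
  fixes n :: nat and L \<delta> \<sigma> \<eta> e1 e2 TT BB dd :: real
  assumes n: "n \<ge> 2" and L: "L = ln (real n)" and \<delta>: "\<delta> > 0"
    and d: "dd \<ge> 1"
    and \<sigma>: "\<sigma> = 1 / (real n ^ 2 * L * sqrt dd)" and \<eta>: "\<eta> = 1 / real n"
    and B: "BB \<ge> 4096 * (real n)\<^sup>2 * L / \<delta>\<^sup>2" and T: "TT \<ge> L / \<delta>" and T1: "TT \<ge> 1"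
    and e1: "e1 = (\<eta>*TT*\<delta>/32)\<^sup>2" and e2: "e2 = (TT*BB*\<delta>/16)\<^sup>2"
  shows "2 * (dd * \<sigma>\<^sup>2 / e1) + exp (1/2 - e2 / (4 * (TT*BB) * (4 * (real n)\<^sup>2))) \<le> 40000 / real n"
proof -
  have Lh: "L \<ge> 1/2" using ln_ge_half[OF n] L by simp
  have np: "real n > 0" using n by simp
  have n1: "real n \<ge> 1" using n by simp
  have ds: "sqrt dd ^ 2 = dd" using d by simp
  have s2: "dd * \<sigma>\<^sup>2 = 1 / (real n ^ 4 * L^2)"
    unfolding \<sigma> using d np Lh by (simp add: power_divide power_mult_distrib ds field_simps)
  have TL: "TT * \<delta> \<ge> L" using T \<delta> by (simp add: field_simps)
  have e1l: "e1 \<ge> (L / (32 * real n))\<^sup>2"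
  proof -
    have "L / (32 * real n) \<le> \<eta>*TT*\<delta>/32" unfolding \<eta> using TL np by (simp add: field_simps)
    moreover have "0 \<le> L / (32 * real n)" using Lh np by simp
    ultimately show ?thesis unfolding e1 by (intro power_mono) auto
  qed
  have e1p: "(L / (32 * real n))\<^sup>2 > 0" using Lh np by simp
  have b1: "dd * \<sigma>\<^sup>2 / e1 \<le> 16384 / real n"
  proof -
    have "dd * \<sigma>\<^sup>2 / e1 \<le> dd * \<sigma>\<^sup>2 / (L / (32 * real n))\<^sup>2"
    proof (rule divide_left_mono)
      show "0 \<le> dd * \<sigma>\<^sup>2" using d by simp
      have "e1 > 0" using e1l e1p by linarith
      thus "0 < e1 * (L / (32 * real n))\<^sup>2" using e1p by simp
    qed (rule e1l)
    also have "\<dots> = 1024 / (real n ^ 2 * L ^ 4)"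
      unfolding s2 using np Lh by (simp add: field_simps power2_eq_square power4_eq_xxxx)
    also have "\<dots> \<le> 16384 / real n"
    proof -
      have L4: "L ^ 4 \<ge> 1/16"
      proof -
        have "(1/2::real) ^ 4 \<le> L ^ 4" using Lh by (intro power_mono) auto
        moreover have "(1/2::real) ^ 4 = 1/16" by (simp add: power_divide)
        ultimately show ?thesis by linarith
      qed
      have nn: "real n ^ 2 \<ge> real n" using n1 by (simp add: power2_eq_square)
      have "real n * (1/16) \<le> real n ^ 2 * L ^ 4" using L4 nn np
        by (meson mult_mono less_imp_le order.trans zero_le_divide_1_iff zero_le_numeral mult_left_mono)
      hence "1024 / (real n ^ 2 * L ^ 4) \<le> 1024 / (real n * (1/16))"
        using np by (intro divide_left_mono) auto
      also have "\<dots> = 16384 / real n" by simp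
      finally show ?thesis .
    qed
    finally show ?thesis .
  qed
  have Bp: "BB > 0"
  proof -
    have "4096 * (real n)\<^sup>2 * L / \<delta>\<^sup>2 > 0" using np Lh \<delta> by simp
    thus ?thesis using B by linarith
  qed
  have x: "e2 / (4 * (TT*BB) * (4 * (real n)\<^sup>2)) \<ge> L"
  proof -
    have eq: "e2 / (4 * (TT*BB) * (4 * (real n)\<^sup>2)) = TT * (BB * \<delta>\<^sup>2 / (4096 * (real n)\<^sup>2))"
      unfolding e2 using np Bp T1 by (simp add: field_simps power2_eq_square)
    have "BB * \<delta>\<^sup>2 \<ge> 4096 * (real n)\<^sup>2 * L" using B \<delta> by (simp add: field_simps)
    hence "BB * \<delta>\<^sup>2 / (4096 * (real n)\<^sup>2) \<ge> L" using np by (simp add: field_simps)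
    moreover have "TT * (BB * \<delta>\<^sup>2 / (4096 * (real n)\<^sup>2)) \<ge> 1 * (BB * \<delta>\<^sup>2 / (4096 * (real n)\<^sup>2))"
      using T1 Bp np by (intro mult_right_mono) auto
    ultimately show ?thesis unfolding eq by linarith
  qed
  have b3: "exp (1/2 - e2 / (4 * (TT*BB) * (4 * (real n)\<^sup>2))) \<le> 2 / real n"
  proof -
    have "exp (1/2 - e2 / (4 * (TT*BB) * (4 * (real n)\<^sup>2))) \<le> exp (1/2 - L)" using x by simp
    also have "\<dots> = exp (1/2) * exp (- L)" by (simp add: exp_add[symmetric])
    also have "exp (- L) = 1 / real n" unfolding L using np by (simp add: exp_minus inverse_eq_divide)
    also have "exp (1/2) * (1 / real n) \<le> 2 * (1 / real n)"
      using exp_half_le2 np by (intro mult_right_mono) auto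
    finally show ?thesis by simp
  qed
  have "2 * (dd * \<sigma>\<^sup>2 / e1) + exp (1/2 - e2 / (4 * (TT*BB) * (4 * (real n)\<^sup>2)))
      \<le> 2 * (16384 / real n) + 2 / real n" using b1 b3 by linarith
  also have "\<dots> \<le> 40000 / real n" using np by (simp add: field_simps)
  finally show ?thesis .
qed


lemma main_lemma:
  fixes n d p :: nat and \<delta>d \<delta>r :: real and o1 o2 :: vec and S :: "nat \<Rightarrow> vec set"
    and D :: "sample measure" and X :: "sample set" and lstar l :: nat and \<sigma> \<eta> :: real and B T :: nat
  assumes n2: "2 \<le> n" and dm: "data_model cS n d p \<delta>d \<delta>r o1 o2 S D X lstar" and ll: "lstar \<le> l"
    and \<sigma>: "\<sigma> = 1 / (real n ^ 2 * ln (real n) * sqrt (real d))"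
    and \<eta>: "\<eta> = 1 / real n"
    and Bb: "real B \<ge> 4096 * (real n)\<^sup>2 * ln (real n) ^ 1 / (1 - \<delta>d)\<^sup>2"
    and Tb: "real T \<ge> 1 * ln (real n) ^ 1 / (1 - \<delta>d)"
  shows "\<exists>E \<in> sets (train_space d \<sigma> D).
          measure (train_space d \<sigma> D) E \<ge> 1 - 40000 / real n ^ 1 \<and>
          (\<forall>((w10, w20), s) \<in> E.
             let (w1, w2) = router_sgd n B \<eta> s w10 w20 T in
             (\<forall>(x, y) \<in> X. \<forall>j<n.
                (y = 1 \<and> x j = o1 \<longrightarrow> (\<forall>J. is_topl d n l w1 x J \<longrightarrow> j \<in> J)) \<and>
                (y = -1 \<and> x j = o2 \<longrightarrow> (\<forall>J. is_topl d n l w2 x J \<longrightarrow> j \<in> J))))"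
proof -
  note bas = dm_basic[OF dm]
  define L where "L = ln (real n)"
  define \<delta> where "\<delta> = 1 - \<delta>d"
  have \<delta>p: "\<delta> > 0" using bas by (simp add: \<delta>_def)
  have np: "real n > 0" using n2 by simp
  have Lp: "L \<ge> 1/2" using ln_ge_half[OF n2] by (simp add: L_def)
  have d1: "d \<ge> 1"
  proof (rule ccontr)
    assume "\<not> d \<ge> 1" hence "d = 0" by simp
    thus False using bas(1) by (simp add: vinner_def)
  qed
  have \<sigma>p: "\<sigma> > 0"
  proof -
    have "ln (real n) > 0" using Lp by (simp add: L_def)
    moreover have "sqrt (real d) > 0" using d1 by simp
    moreover have "(real n)\<^sup>2 > 0" using np by simp
    ultimately show ?thesis unfolding \<sigma> by simp
  qed
  have \<eta>p: "\<eta> > 0" unfolding \<eta> using np by simp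
  have TL: "real T \<ge> L / \<delta>" using Tb by (simp add: L_def \<delta>_def)
  have Tp: "real T > 0"
  proof -
    have "L / \<delta> > 0" using Lp \<delta>p by simp
    thus ?thesis using TL by linarith
  qed
  hence T1: "real T \<ge> 1" by simp
  have BL: "real B \<ge> 4096 * (real n)\<^sup>2 * L / \<delta>\<^sup>2" using Bb by (simp add: L_def \<delta>_def)
  have Bp: "real B > 0"
  proof -
    have "4096 * (real n)\<^sup>2 * L / \<delta>\<^sup>2 > 0" using np Lp \<delta>p by simp
    thus ?thesis using BL by linarith
  qed
  define N where "N = T * B"
  have Np: "N > 0" using Tp Bp by (simp add: N_def)
  have RN: "real N = real T * real B" by (simp add: N_def)
  define e1 where "e1 = (\<eta> * real T * \<delta> / 32)\<^sup>2"
  define e2 where "e2 = (real T * real B * \<delta> / 16)\<^sup>2"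
  have e1p: "e1 > 0" unfolding e1_def using \<eta>p Tp \<delta>p by simp
  define E where "E = Ev n d o1 o2 N \<sigma> e1 e2 D"
  have n1: "n \<ge> 1" using n2 by simp
  have Em: "E \<in> sets (train_space d \<sigma> D)" unfolding E_def by (rule prob_part(1)[OF dm n1 \<sigma>p e1p Np])
  have Eprob: "measure (train_space d \<sigma> D) E
          \<ge> 1 - (2 * (real d * \<sigma>\<^sup>2 / e1) + exp (1/2 - e2 / (4 * real N * (4 * (real n)\<^sup>2))))"
    unfolding E_def by (rule prob_part(2)[OF dm n1 \<sigma>p e1p Np])
  have ar: "2 * (real d * \<sigma>\<^sup>2 / e1) + exp (1/2 - e2 / (4 * (real T * real B) * (4 * (real n)\<^sup>2))) \<le> 40000 / real n"
    by (rule arith_bound[OF n2 L_def \<delta>p _ _ \<eta> BL TL T1 e1_def e2_def]) (use d1 \<sigma> L_def in auto)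
  have prob: "measure (train_space d \<sigma> D) E \<ge> 1 - 40000 / real n ^ 1"
    using Eprob ar RN by simp
  have good: "let (w1, w2) = router_sgd n B \<eta> s w10 w20 T in
             (\<forall>(x, y) \<in> X. \<forall>j<n.
                (y = 1 \<and> x j = o1 \<longrightarrow> (\<forall>J. is_topl d n l w1 x J \<longrightarrow> j \<in> J)) \<and>
                (y = -1 \<and> x j = o2 \<longrightarrow> (\<forall>J. is_topl d n l w2 x J \<longrightarrow> j \<in> J)))"
    if \<omega>E: "((w10, w20), s) \<in> E" for w10 w20 s
  proof -
    define SS where "SS = (\<lambda>c. \<Sum>i<N. Zd n o1 o2 (s i) c)"
    have w10: "nrm2 d w10 \<le> (\<eta> * real T * (1 - \<delta>d) / 32)\<^sup>2"
      using \<omega>E unfolding E_def Ev_def e1_def \<delta>_def by auto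
    have w20: "nrm2 d w20 \<le> (\<eta> * real T * (1 - \<delta>d) / 32)\<^sup>2"
      using \<omega>E unfolding E_def Ev_def e1_def \<delta>_def by auto
    have SSb: "nrm2 d SS \<le> (real T * real B * (1 - \<delta>d) / 16)\<^sup>2"
      using \<omega>E unfolding E_def Ev_def e2_def \<delta>_def SS_def by auto
    have sumeq: "(\<Sum>k<T*B. snd (s k) * (\<Sum>j<n. fst (s k) j i)) = SS i + real N * ((o1 i - o2 i)/2)" for i
      unfolding SS_def N_def Zd_def by (simp add: sum_subtractf)
    have W: "router_sgd n B \<eta> s w10 w20 T =
      ((\<lambda>i. w10 i + (\<eta>/real B) * SS i + (\<eta>*real T) * ((o1 i - o2 i)/2)),
       (\<lambda>i. w20 i + (-(\<eta>/real B)) * SS i + (-(\<eta>*real T)) * ((o1 i - o2 i)/2)))"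
      unfolding sgd_closed sumeq RN using Bp by (simp add: fun_eq_iff field_simps)
    define W1 where "W1 = (\<lambda>i. w10 i + (\<eta>/real B) * SS i + (\<eta>*real T) * ((o1 i - o2 i)/2))"
    define W2 where "W2 = (\<lambda>i. w20 i + (-(\<eta>/real B)) * SS i + (-(\<eta>*real T)) * ((o1 i - o2 i)/2))"
    show ?thesis
      unfolding W Let_def prod.case W1_def[symmetric] W2_def[symmetric]
    proof (intro ballI)
      fix z assume zX: "z \<in> X"
      obtain x y where z: "z = (x, y)" by (cases z)
      note st = dm_struct[OF dm zX[unfolded z]]
      show "case z of (x, y) \<Rightarrow> \<forall>j<n. (y = 1 \<and> x j = o1 \<longrightarrow> (\<forall>J. is_topl d n l W1 x J \<longrightarrow> j \<in> J)) \<and>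
                (y = -1 \<and> x j = o2 \<longrightarrow> (\<forall>J. is_topl d n l W2 x J \<longrightarrow> j \<in> J))"
        unfolding z prod.case
      proof (intro allI impI conjI)
      fix j assume jn: "j < n"
      obtain j0 where j0: "j0 < n" "x j0 = (if y = 1 then o1 else o2)"
        "\<forall>j'<n. j' \<noteq> j0 \<longrightarrow> vinner d (x j') (x j') = 1 \<and> x j' \<noteq> o1 \<and> x j' \<noteq> o2 \<and> (\<exists>k<p. x j' \<in> S k)"
        using st(2) by blast
      define Bad where "Bad = {j. j < n \<and> (\<exists>k<p. x j \<in> S k) \<and> \<bar>vinner d (\<lambda>i. o1 i - o2 i) (x j)\<bar> > (1 - \<delta>d) / 2}"
      have finB: "finite Bad" unfolding Bad_def by auto
      have cB: "card Bad < l" using st(4) ll unfolding Bad_def by linarith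
      {
        fix J assume y1: "y = 1 \<and> x j = o1" and tj: "is_topl d n l W1 x J"
        have jj: "j = j0" using j0 jn y1 by (metis)
        show "j \<in> J"
        proof (rule topl_mem[OF tj jn finB cB])
          fix j' assume j'n: "j' < n" and ne: "j' \<noteq> j" and le: "vinner d W1 (x j) \<le> vinner d W1 (x j')"
          have pj': "vinner d (x j') (x j') = 1" "\<exists>k<p. x j' \<in> S k" using j0(3) j'n ne jj by auto
          show "j' \<in> Bad"
          proof (rule ccontr)
            assume "j' \<notin> Bad"
            hence g: "\<bar>vinner d (\<lambda>i. o1 i - o2 i) (x j')\<bar> \<le> (1 - \<delta>d) / 2"
              using j'n pj'(2) unfolding Bad_def by auto
            have "vinner d W1 (x j') < vinner d W1 o1"
              unfolding W1_def
              by (rule key_pos(1)[OF bas(1,2) pj'(1) bas(3,5) g \<eta>p Tp Bp w10 SSb])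
            thus False using le y1 by simp
          qed
        qed
      }
      {
        fix J assume y1: "y = -1 \<and> x j = o2" and tj: "is_topl d n l W2 x J"
        have jj: "j = j0" using j0 jn y1 by (metis)
        show "j \<in> J"
        proof (rule topl_mem[OF tj jn finB cB])
          fix j' assume j'n: "j' < n" and ne: "j' \<noteq> j" and le: "vinner d W2 (x j) \<le> vinner d W2 (x j')"
          have pj': "vinner d (x j') (x j') = 1" "\<exists>k<p. x j' \<in> S k" using j0(3) j'n ne jj by auto
          show "j' \<in> Bad"
          proof (rule ccontr)
            assume "j' \<notin> Bad"
            hence g: "\<bar>vinner d (\<lambda>i. o1 i - o2 i) (x j')\<bar> \<le> (1 - \<delta>d) / 2"
              using j'n pj'(2) unfolding Bad_def by auto
            have "vinner d W2 (x j') < vinner d W2 o2"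
              unfolding W2_def
              by (rule key_pos(2)[OF bas(1,2) pj'(1) bas(3,5) g \<eta>p Tp Bp w20 SSb])
            thus False using le y1 by simp
          qed
        qed
      }
    qed
    qed
  qed
  show ?thesis
  proof (rule bexI[OF _ Em], rule conjI[OF prob])
    show "\<forall>((w10, w20), s) \<in> E.
             let (w1, w2) = router_sgd n B \<eta> s w10 w20 T in
             (\<forall>(x, y) \<in> X. \<forall>j<n.
                (y = 1 \<and> x j = o1 \<longrightarrow> (\<forall>J. is_topl d n l w1 x J \<longrightarrow> j \<in> J)) \<and>
                (y = -1 \<and> x j = o2 \<longrightarrow> (\<forall>J. is_topl d n l w2 x J \<longrightarrow> j \<in> J)))"
      using good by fast
  qed
qed

theorem lemma4p1:
  shows "\<forall>cS > 0. \<exists>c\<sigma> > 0. \<exists>c\<eta> > 0. \<exists>CB > 0. \<exists>CT > 0. \<exists>a::nat. \<exists>C > 0. \<exists>k::nat. k > 0 \<and>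
    (\<forall>n d p \<delta>d \<delta>r o1 o2 S D X lstar l \<sigma> \<eta> (B::nat) (T::nat).
       2 \<le> n \<longrightarrow>
       data_model cS n d p \<delta>d \<delta>r o1 o2 S D X lstar \<longrightarrow>
       lstar \<le> l \<longrightarrow>
       \<sigma> = c\<sigma> / (real n ^ 2 * ln (real n) * sqrt (real d)) \<longrightarrow>
       \<eta> = c\<eta> / real n \<longrightarrow>
       real B \<ge> CB * (real n)\<^sup>2 * ln (real n) ^ a / (1 - \<delta>d)\<^sup>2 \<longrightarrow>
       real T \<ge> CT * ln (real n) ^ a / (1 - \<delta>d) \<longrightarrow>
       (\<exists>E \<in> sets (train_space d \<sigma> D).
          measure (train_space d \<sigma> D) E \<ge> 1 - C / real n ^ k \<and>
          (\<forall>((w10, w20), s) \<in> E.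
             let (w1, w2) = router_sgd n B \<eta> s w10 w20 T in
             (\<forall>(x, y) \<in> X. \<forall>j<n.
                (y = 1 \<and> x j = o1 \<longrightarrow> (\<forall>J. is_topl d n l w1 x J \<longrightarrow> j \<in> J)) \<and>
                (y = -1 \<and> x j = o2 \<longrightarrow> (\<forall>J. is_topl d n l w2 x J \<longrightarrow> j \<in> J))))))"
proof (intro allI impI)
  fix cS :: real assume "cS > 0"
  show "\<exists>c\<sigma> > 0. \<exists>c\<eta> > 0. \<exists>CB > 0. \<exists>CT > 0. \<exists>a::nat. \<exists>C > 0. \<exists>k::nat. k > 0 \<and>
    (\<forall>n d p \<delta>d \<delta>r o1 o2 S D X lstar l \<sigma> \<eta> (B::nat) (T::nat).
       2 \<le> n \<longrightarrow>
       data_model cS n d p \<delta>d \<delta>r o1 o2 S D X lstar \<longrightarrow>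
       lstar \<le> l \<longrightarrow>
       \<sigma> = c\<sigma> / (real n ^ 2 * ln (real n) * sqrt (real d)) \<longrightarrow>
       \<eta> = c\<eta> / real n \<longrightarrow>
       real B \<ge> CB * (real n)\<^sup>2 * ln (real n) ^ a / (1 - \<delta>d)\<^sup>2 \<longrightarrow>
       real T \<ge> CT * ln (real n) ^ a / (1 - \<delta>d) \<longrightarrow>
       (\<exists>E \<in> sets (train_space d \<sigma> D).
          measure (train_space d \<sigma> D) E \<ge> 1 - C / real n ^ k \<and>
          (\<forall>((w10, w20), s) \<in> E.
             let (w1, w2) = router_sgd n B \<eta> s w10 w20 T in
             (\<forall>(x, y) \<in> X. \<forall>j<n.
                (y = 1 \<and> x j = o1 \<longrightarrow> (\<forall>J. is_topl d n l w1 x J \<longrightarrow> j \<in> J)) \<and>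
                (y = -1 \<and> x j = o2 \<longrightarrow> (\<forall>J. is_topl d n l w2 x J \<longrightarrow> j \<in> J))))))"
    apply (rule exI[where x="1::real"], rule conjI, simp)
    apply (rule exI[where x="1::real"], rule conjI, simp)
    apply (rule exI[where x="4096::real"], rule conjI, simp)
    apply (rule exI[where x="1::real"], rule conjI, simp)
    apply (rule exI[where x="1::nat"])
    apply (rule exI[where x="40000::real"], rule conjI, simp)
    apply (rule exI[where x="1::nat"], rule conjI, simp)
    apply (intro allI impI)
    apply (rule main_lemma)
          apply assumption+
    done
qed

end
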